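(* Let $(G,L,v)$ be a reachable triple and $i\in[4]$ a color. Then one of the following holds: (1) $P(G,L,v,i,D)=\frac12$ for all integers $D\ge2$; (2) $P(G,L,v,i,D)\le\frac{13}{27}$ for all integers $D\ge 2$, and specifically $P(G,L,v,i,D)\le\frac{6}{13}$ when $\deg_G(v)\le1$. Furthermore, when $P(G,L,v,i,D)=\frac12$ for some integer $D\ge2$, one of the following three cases occurs: (a) $\deg_G(v)=0$ and $j,w\notin L(v)$ for two distinct colors $j,w$ other than $i$; (b) $\deg_G(v)=1$ and, denoting by $u$ the neighbor of $v$, $i\notin L(u)$ and $j\notin L(u)\cup L(v)$ for some color $j\neq i$; (c) $\deg_G(v)=2$ and, denoting by $u_1,u_2$ the two neighbors of $v$, the vertices $v,u_1,u_2$ form a triangle and $i\notin L(u_1)\cup L(u_2)$.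
   Context: Colors are $[4]=\{1,2,3,4\}$. A list-coloring instance $(G,L)$ is a finite simple graph $G=(V,E)$ with $L:V\to 2^{[4]}$. For a vertex $v$, $G_v$ is $G$ with $v$ and its incident edges removed, and $G_{v,w}=(G_v)_w$. If $v$ has neighbors $v_1,\dots,v_d$ (in a fixed order), then for $k\in[d]$ and a color $j$, $L_{k,j}$ is the list assignment on $G_v$ with $L_{k,j}(v_\ell)=L(v_\ell)\setminus\{j\}$ for $\ell<k$ and $L_{k,j}(u)=L(u)$ for all other vertices $u$ (so $L_{1,j}=L$). A triple $(G,L,v)$ with $v\in V$ is reachable if $\deg_G(u)\le3$ and $|L(u)|\ge\deg_G(u)+1$ for every $u\in V$, and moreover $\deg_G(v)\le2$ and $|L(v)|\ge\deg_G(v)+2$. The procedure $P(G,L,v,i,D)$ ($i\in[4]$, $D$ an integer) is defined recursively (empty products equal $1$): (a) If $i\notin L(v)$, return $0$. Otherwise, if $D\le 0$ or $\deg_G(v)=0$, return $1/|L(v)|$. (b) If $\deg_G(v)=1$ with neighbor $v_1$: let $x=P(G_v,L,v_1,i,D-1)$. If $|L(v)|=2$, say $L(v)=\{i,j\}$, let $y=P(G_v,L,v_1,j,D-1)$ and return $\frac{1-x}{2-x-y}$. If $|L(v)|=4$, return $\frac{1-x}{3}$. If $|L(v)|=3$, let $j$ be the unique color in $[4]\setminus L(v)$, $y=P(G_v,L,v_1,j,D-1)$, and return $\frac{1-x}{2+y}$. (c) If $\deg_G(v)=2$: order its neighbors $v_1,v_2$ so that $\deg_G(v_1)\ge\deg_G(v_2)$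 and, if $\deg_G(v_1)=\deg_G(v_2)=1$, so that $i\notin L(v_1)$ implies $i\notin L(v_2)$. Let $u_1,\dots,u_{d_1}$ be the neighbors of $v_1$ in $G_v$ (fixed order) and for $k\in[d_1]$, $w\in[4]$ let $L'_{k,w}$ be the list assignment on $G_{v,v_1}$ with $L'_{k,w}(u_\ell)=L(u_\ell)\setminus\{w\}$ for $\ell<k$ and $L'_{k,w}(u)=L(u)$ otherwise. Set $x_{k,w}=P(G_{v,v_1},L'_{k,w},u_k,w,D-1)$ for $k\in[d_1]$, $w\in L(v_1)$. For $j\in L(v)$ set $f_j=0$ if $j\notin L(v_1)$ and otherwise $f_j=\frac{\prod_{k=1}^{d_1}(1-x_{k,j})}{\sum_{w\in L(v_1)}\prod_{k=1}^{d_1}(1-x_{k,w})}$, and set $y_j=P(G_v,L_{2,j},v_2,j,D-1)$. Return $\frac{(1-f_i)(1-y_i)}{\sum_{j\in L(v)}(1-f_j)(1-y_j)}$. (d) If $\deg_G(v)=3$ with neighbors $v_1,v_2,v_3$: for $j\in L(v)$ let $x_j=P(G_v,L_{1,j},v_1,j,D-1)$, $y_j=P(G_v,L_{2,j},v_2,j,D-1)$, $z_j=P(G_v,L_{3,j},v_3,j,D-1)$, and return $\frac{(1-x_i)(1-y_i)(1-z_i)}{\sum_{j\in L(v)}(1-x_j)(1-y_j)(1-z_j)}$. For reachable triples, all recursive calls are again on reachable triples and case (d) never occurs. *)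

theory Defs
  imports Complex_Main
begin

definition simple_graph :: "'a set \<Rightarrow> 'a set set \<Rightarrow> bool" where
  "simple_graph V E \<longleftrightarrow> finite V \<and>
     (\<forall>e\<in>E. \<exists>x y. e = {x, y} \<and> x \<noteq> y \<and> x \<in> V \<and> y \<in> V)"

definition nbrs :: "'a set set \<Rightarrow> 'a \<Rightarrow> 'a set" where
  "nbrs E v = {u. {u, v} \<in> E}"

definition deg :: "'a set set \<Rightarrow> 'a \<Rightarrow> nat" where
  "deg E v = card (nbrs E v)"

definition delV :: "'a set \<Rightarrow> 'a \<Rightarrow> 'a set" where
  "delV V v = V - {v}"

definition delE :: "'a set set \<Rightarrow> 'a \<Rightarrow> 'a set set" where
  "delE E v = {e \<in> E. v \<notin> e}"

abbreviation colors :: "nat set" where "colors \<equiv> {1..4}"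

text \<open>A neighbour-ordering: for each graph, list assignment and vertex, a list
  enumerating the neighbours without repetition (the "fixed order").\<close>
definition valid_ord :: "('a set \<Rightarrow> 'a set set \<Rightarrow> ('a \<Rightarrow> nat set) \<Rightarrow> 'a \<Rightarrow> 'a list) \<Rightarrow> bool" where
  "valid_ord ord \<longleftrightarrow> (\<forall>V E L v. simple_graph V E \<longrightarrow>
      distinct (ord V E L v) \<and> set (ord V E L v) = nbrs E v)"

text \<open>Lupd L us w k: remove colour w from the lists of the first k vertices of us
  (i.e. the list assignment L_{k+1,w} of the paper, 0-indexed).\<close>
definition Lupd :: "('a \<Rightarrow> nat set) \<Rightarrow> 'a list \<Rightarrow> nat \<Rightarrow> nat \<Rightarrow> ('a \<Rightarrow> nat set)" where
  "Lupd L us w k = (\<lambda>u. if u \<in> set (take k us) then L u - {w} else L u)"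

definition ok_order :: "'a set set \<Rightarrow> ('a \<Rightarrow> nat set) \<Rightarrow> nat \<Rightarrow> 'a \<Rightarrow> 'a \<Rightarrow> bool" where
  "ok_order E L i a b \<longleftrightarrow> deg E a \<ge> deg E b \<and>
     (deg E a = 1 \<and> deg E b = 1 \<longrightarrow> (i \<notin> L a \<longrightarrow> i \<notin> L b))"

fun Pf :: "('a set \<Rightarrow> 'a set set \<Rightarrow> ('a \<Rightarrow> nat set) \<Rightarrow> 'a \<Rightarrow> 'a list) \<Rightarrow> nat \<Rightarrow>
           'a set \<Rightarrow> 'a set set \<Rightarrow> ('a \<Rightarrow> nat set) \<Rightarrow> 'a \<Rightarrow> nat \<Rightarrow> real" where
  "Pf ord 0 V E L v i = (if i \<notin> L v then 0 else 1 / real (card (L v)))"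
| "Pf ord (Suc n) V E L v i =
    (if i \<notin> L v then 0
     else (let ns = ord V E L v; V' = delV V v; E' = delE E v in
      if deg E v = 0 then 1 / real (card (L v))
      else if deg E v = 1 then
        (let v1 = ns ! 0; x = Pf ord n V' E' L v1 i in
         if card (L v) = 2 then
           (let j = the_elem (L v - {i}); y = Pf ord n V' E' L v1 j in (1 - x) / (2 - x - y))
         else if card (L v) = 4 then (1 - x) / 3
         else if card (L v) = 3 then
           (let j = the_elem (colors - L v); y = Pf ord n V' E' L v1 j in (1 - x) / (2 + y))
         else 0)
      else if deg E v = 2 then
        (let a = ns ! 0; b = ns ! 1;
             v1 = (if ok_order E L i a b then a else b);
             v2 = (if ok_order E L i a b then b else a);
             us = ord V' E' L v1;
             V'' = delV V' v1; E'' = delE E' v1;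
             pr = (\<lambda>w. \<Prod>k<length us. (1 - Pf ord n V'' E'' (Lupd L us w k) (us ! k) w));
             f = (\<lambda>j. if j \<notin> L v1 then 0 else pr j / (\<Sum>w\<in>L v1. pr w));
             y = (\<lambda>j. Pf ord n V' E' (Lupd L [v1, v2] j 1) v2 j)
         in (1 - f i) * (1 - y i) / (\<Sum>j\<in>L v. (1 - f j) * (1 - y j)))
      else if deg E v = 3 then
        (let x = (\<lambda>j. Pf ord n V' E' (Lupd L ns j 0) (ns ! 0) j);
             y = (\<lambda>j. Pf ord n V' E' (Lupd L ns j 1) (ns ! 1) j);
             z = (\<lambda>j. Pf ord n V' E' (Lupd L ns j 2) (ns ! 2) j)
         in (1 - x i) * (1 - y i) * (1 - z i) /
            (\<Sum>j\<in>L v. (1 - x j) * (1 - y j) * (1 - z j)))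
      else 0))"

text \<open>P(G,L,v,i,D) for integer D (D \<le> 0 means fuel 0).\<close>
definition P :: "('a set \<Rightarrow> 'a set set \<Rightarrow> ('a \<Rightarrow> nat set) \<Rightarrow> 'a \<Rightarrow> 'a list) \<Rightarrow>
           'a set \<Rightarrow> 'a set set \<Rightarrow> ('a \<Rightarrow> nat set) \<Rightarrow> 'a \<Rightarrow> nat \<Rightarrow> int \<Rightarrow> real" where
  "P ord V E L v i D = Pf ord (nat D) V E L v i"

definition reachable :: "'a set \<Rightarrow> 'a set set \<Rightarrow> ('a \<Rightarrow> nat set) \<Rightarrow> 'a \<Rightarrow> bool" where
  "reachable V E L v \<longleftrightarrow> simple_graph V E \<and> v \<in> V \<and>
     (\<forall>u\<in>V. L u \<subseteq> colors \<and> deg E u \<le> 3 \<and> card (L u) \<ge> deg E u + 1) \<and>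
     deg E v \<le> 2 \<and> card (L v) \<ge> deg E v + 2"

end

theory Submission
  imports Defs
begin



lemma nbrs_in_V:
  assumes "simple_graph V E" "u \<in> nbrs E x"
  shows "u \<in> V \<and> x \<in> V \<and> u \<noteq> x"
proof -
  from assms(2) have "{u, x} \<in> E" by (simp add: nbrs_def)
  with assms(1) obtain a b where "{u,x} = {a,b}" "a \<noteq> b" "a \<in> V" "b \<in> V"
    unfolding simple_graph_def by blast
  then show ?thesis by (auto simp: doubleton_eq_iff)
qed

lemma nbrs_sym: "u \<in> nbrs E x \<longleftrightarrow> x \<in> nbrs E u"
  by (simp add: nbrs_def insert_commute)

lemma finite_nbrs: "simple_graph V E \<Longrightarrow> finite (nbrs E x)"
  by (meson finite_subset nbrs_in_V simple_graph_def subsetI)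

lemma nbrs_delE: "u \<noteq> v \<Longrightarrow> nbrs (delE E v) u = nbrs E u - {v}"
  by (auto simp: nbrs_def delE_def)

lemma simple_del: "simple_graph V E \<Longrightarrow> simple_graph (delV V v) (delE E v)"
  unfolding simple_graph_def delV_def delE_def by blast

lemma deg_delE:
  assumes "simple_graph V E" "u \<noteq> v"
  shows "deg (delE E v) u = (if v \<in> nbrs E u then deg E u - 1 else deg E u)"
  using assms by (simp add: deg_def nbrs_delE card_Diff_singleton finite_nbrs)

definition good :: "'a set \<Rightarrow> 'a set set \<Rightarrow> ('a \<Rightarrow> nat set) \<Rightarrow> bool" where
  "good V E L \<longleftrightarrow> simple_graph V E \<and> (\<forall>u\<in>V. L u \<subseteq> colors \<and> deg E u \<le> 3 \<and> deg E u + 1 \<le> card (L u))"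

lemma reach_good: "reachable V E L v \<longleftrightarrow> good V E L \<and> v \<in> V \<and> deg E v \<le> 2 \<and> deg E v + 2 \<le> card (L v)"
  unfolding reachable_def good_def by auto

lemma deg_pos: "simple_graph V E \<Longrightarrow> v \<in> nbrs E u \<Longrightarrow> deg E u \<ge> 1"
  unfolding deg_def using finite_nbrs card_0_eq
  by (metis One_nat_def Suc_leI empty_iff neq0_conv)

lemma good_del:
  assumes g: "good V E L"
    and h: "\<And>u. u \<in> V \<Longrightarrow> u \<noteq> v \<Longrightarrow> L' u \<subseteq> L u \<and> card (L u) \<le> card (L' u) + (if u \<in> nbrs E v then 1 else 0)"
  shows "good (delV V v) (delE E v) L'"
proof -
  have sg: "simple_graph V E" using g by (simp add: good_def)
  show ?thesis unfolding good_def
  proof (rule conjI[OF simple_del[OF sg]], rule ballI)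
    fix u assume u: "u \<in> delV V v"
    hence uV: "u \<in> V" and uv: "u \<noteq> v" by (auto simp: delV_def)
    from g uV have A: "L u \<subseteq> colors" "deg E u \<le> 3" "deg E u + 1 \<le> card (L u)" by (auto simp: good_def)
    from h[OF uV uv] have B: "L' u \<subseteq> L u" "card (L u) \<le> card (L' u) + (if u \<in> nbrs E v then 1 else 0)" by auto
    have dd: "deg (delE E v) u = (if v \<in> nbrs E u then deg E u - 1 else deg E u)"
      using deg_delE[OF sg uv] .
    show "L' u \<subseteq> colors \<and> deg (delE E v) u \<le> 3 \<and> deg (delE E v) u + 1 \<le> card (L' u)"
    proof (cases "u \<in> nbrs E v")
      case True
      hence "v \<in> nbrs E u" by (simp add: nbrs_sym)
      hence "deg E u \<ge> 1" using deg_pos[OF sg] by blast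
      then show ?thesis using A B dd True \<open>v \<in> nbrs E u\<close> by auto
    next
      case False
      hence "v \<notin> nbrs E u" by (simp add: nbrs_sym)
      then show ?thesis using A B dd False by auto
    qed
  qed
qed

lemma reach_child:
  assumes g: "good V E L" and g': "good (delV V v) (delE E v) L'" and w: "w \<in> nbrs E v" and Lw: "L' w = L w"
  shows "reachable (delV V v) (delE E v) L' w"
proof -
  have sg: "simple_graph V E" using g by (simp add: good_def)
  from nbrs_in_V[OF sg w] have wV: "w \<in> V" "w \<noteq> v" by auto
  have vw: "v \<in> nbrs E w" using w by (simp add: nbrs_sym)
  have "deg E w \<ge> 1" using deg_pos[OF sg vw] .
  moreover have "deg (delE E v) w = deg E w - 1" using deg_delE[OF sg wV(2)] vw by simp
  moreover have "deg E w \<le> 3" "deg E w + 1 \<le> card (L w)" using g wV by (auto simp: good_def)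
  ultimately show ?thesis unfolding reach_good using g' wV Lw by (auto simp: delV_def)
qed

lemma ord_props:
  assumes "valid_ord ord" "simple_graph V E"
  shows "distinct (ord V E L v) \<and> set (ord V E L v) = nbrs E v \<and> length (ord V E L v) = deg E v"
  using assms unfolding valid_ord_def deg_def by (metis distinct_card)

lemma Pf_notin: "w \<notin> L u \<Longrightarrow> Pf ord n V E L u w = 0"
  by (cases n) auto

lemma Pf_deg0: "deg E u = 0 \<Longrightarrow> Pf ord n V E L u w = (if w \<in> L u then 1 / real (card (L u)) else 0)"
  by (cases n) auto

lemma card_colors_le: "L \<subseteq> colors \<Longrightarrow> card L \<le> 4"
  by (metis card_atLeastAtMost card_mono diff_Suc_1 finite_atLeastAtMost numeral_nat(2) numeral_2_eq_2 numeral_3_eq_3 Suc_numeral)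

lemma Pf_deg1_4:
  assumes "i \<in> L v" "deg E v = 1" "card (L v) = 4"
  shows "Pf ord (Suc n) V E L v i = (1 - Pf ord n (delV V v) (delE E v) L (ord V E L v ! 0) i) / 3"
  using assms by (simp add: Let_def)

lemma Pf_deg1_3:
  assumes "i \<in> L v" "deg E v = 1" "card (L v) = 3"
  shows "Pf ord (Suc n) V E L v i = (1 - Pf ord n (delV V v) (delE E v) L (ord V E L v ! 0) i) /
     (2 + Pf ord n (delV V v) (delE E v) L (ord V E L v ! 0) (the_elem (colors - L v)))"
  using assms by (simp add: Let_def)

definition prw where
  "prw ord n V E L v v1 w = (let us = ord (delV V v) (delE E v) L v1 in
     \<Prod>k<length us. (1 - Pf ord n (delV (delV V v) v1) (delE (delE E v) v1) (Lupd L us w k) (us ! k) w))"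

definition fw where
  "fw ord n V E L v v1 j = (if j \<notin> L v1 then 0 else prw ord n V E L v v1 j / (\<Sum>w\<in>L v1. prw ord n V E L v v1 w))"

definition yw where
  "yw ord n V E L v v1 v2 j = Pf ord n (delV V v) (delE E v) (Lupd L [v1, v2] j 1) v2 j"

definition F2 where
  "F2 ord n V E L v v1 v2 i = (1 - fw ord n V E L v v1 i) * (1 - yw ord n V E L v v1 v2 i) /
     (\<Sum>j\<in>L v. (1 - fw ord n V E L v v1 j) * (1 - yw ord n V E L v v1 v2 j))"

lemma Pf_deg2:
  assumes "i \<in> L v" "deg E v = 2"
  shows "\<exists>v1 v2. ((v1 = ord V E L v ! 0 \<and> v2 = ord V E L v ! 1) \<or> (v1 = ord V E L v ! 1 \<and> v2 = ord V E L v ! 0))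
     \<and> Pf ord (Suc n) V E L v i = F2 ord n V E L v v1 v2 i"
proof -
  have c: "(i \<notin> L v) = False" "(deg E v = 0) = False" "(deg E v = 1) = False" "(deg E v = 2) = True"
    using assms by auto
  show ?thesis
  proof (cases "ok_order E L i (ord V E L v ! 0) (ord V E L v ! 1)")
    case True
    hence t: "ok_order E L i (ord V E L v ! 0) (ord V E L v ! 1) = True" by simp
    have "Pf ord (Suc n) V E L v i = F2 ord n V E L v (ord V E L v ! 0) (ord V E L v ! 1) i"
      by (simp only: Pf.simps(2) c t if_True if_False F2_def fw_def yw_def prw_def Let_def)
    thus ?thesis by blast
  next
    case False
    hence t: "ok_order E L i (ord V E L v ! 0) (ord V E L v ! 1) = False" by simp
    have "Pf ord (Suc n) V E L v i = F2 ord n V E L v (ord V E L v ! 1) (ord V E L v ! 0) i"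
      by (simp only: Pf.simps(2) c t if_True if_False F2_def fw_def yw_def prw_def Let_def)
    thus ?thesis by blast
  qed
qed



lemma frac_bounds:
  fixes pr :: "nat \<Rightarrow> real"
  assumes fin: "finite A" and ne: "A \<noteq> {}" and b: "\<And>w. w \<in> A \<Longrightarrow> a \<le> pr w \<and> pr w \<le> 1" and a: "0 < a"
  defines "f \<equiv> \<lambda>j. if j \<notin> A then 0 else pr j / (\<Sum>w\<in>A. pr w)"
  shows "\<And>j. 0 \<le> f j" "\<And>j. f j \<le> 1"
    and "\<And>C. finite C \<Longrightarrow> A \<subseteq> C \<Longrightarrow> (\<Sum>j\<in>C. f j) = 1"
    and "\<And>j. f j \<le> 1 / (1 + (real (card A) - 1) * a)"
    and "\<And>j. j \<in> A \<Longrightarrow> a / real (card A) \<le> f j"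
proof -
  define T where "T = (\<Sum>w\<in>A. pr w)"
  have Tge: "T \<ge> real (card A) * a" unfolding T_def
    using sum_mono[of A "\<lambda>_. a" pr] b by simp
  have cpos: "real (card A) \<ge> 1" using fin ne by (simp add: Suc_leI card_gt_0_iff)
  have Tpos: "T > 0" using Tge cpos a
    by (smt (verit, ccfv_SIG) mult_le_cancel_right1)
  have Tle: "T \<le> real (card A)" unfolding T_def using sum_mono[of A pr "\<lambda>_. 1"] b by simp
  have Tsplit: "j \<in> A \<Longrightarrow> T = pr j + (\<Sum>w\<in>A - {j}. pr w)" for j
    unfolding T_def using fin by (simp add: sum.remove)
  have Rge: "j \<in> A \<Longrightarrow> (\<Sum>w\<in>A - {j}. pr w) \<ge> (real (card A) - 1) * a" for j
  proof -
    assume j: "j \<in> A"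
    have "(\<Sum>w\<in>A - {j}. pr w) \<ge> (\<Sum>w\<in>A - {j}. a)" using b by (intro sum_mono) auto
    also have "(\<Sum>w\<in>A - {j}. a) = (real (card A) - 1) * a"
    proof -
      have "card A \<ge> 1" using fin j by (metis One_nat_def Suc_leI card_gt_0_iff empty_iff)
      thus ?thesis using fin j by (simp add: card_Diff_singleton of_nat_diff)
    qed
    finally show ?thesis .
  qed
  show "0 \<le> f j" for j
  proof (cases "j \<in> A")
    case True
    then show ?thesis using b[OF True] a Tpos unfolding f_def T_def[symmetric] by simp
  qed (simp add: f_def)
  show "f j \<le> 1" for j
  proof (cases "j \<in> A")
    case True
    have "pr j \<le> T" using Tsplit[OF True] Rge[OF True] cpos a by (smt (verit) mult_nonneg_nonneg)
    then show ?thesis using True Tpos unfolding f_def T_def[symmetric] by simp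
  qed (simp add: f_def)
  show "finite C \<Longrightarrow> A \<subseteq> C \<Longrightarrow> (\<Sum>j\<in>C. f j) = 1" for C
  proof -
    assume C: "finite C" "A \<subseteq> C"
    have "(\<Sum>j\<in>C. f j) = (\<Sum>j\<in>A. f j)"
      using C by (intro sum.mono_neutral_right) (auto simp: f_def)
    also have "\<dots> = (\<Sum>j\<in>A. pr j / T)" by (simp add: f_def T_def)
    also have "\<dots> = T / T" by (simp add: sum_divide_distrib[symmetric] T_def)
    finally show ?thesis using Tpos by simp
  qed
  show "f j \<le> 1 / (1 + (real (card A) - 1) * a)" for j
  proof (cases "j \<in> A")
    case True
    define c where "c = (real (card A) - 1) * a"
    have c0: "c \<ge> 0" using cpos a by (simp add: c_def)
    have p: "0 \<le> pr j" "pr j \<le> 1" using b[OF True] a by auto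
    have "T \<ge> pr j + c" using Tsplit[OF True] Rge[OF True] by (simp add: c_def)
    moreover have "pr j * c \<le> c" using p c0 by (simp add: mult_left_le_one_le)
    ultimately have "pr j / T \<le> 1 / (1 + c)"
      using p c0 Tpos by (simp add: divide_simps algebra_simps)
    thus ?thesis using True by (simp add: f_def T_def c_def)
  next
    case False
    have "0 \<le> 1 / (1 + (real (card A) - 1) * a)" using cpos a by simp
    thus ?thesis using False by (simp add: f_def)
  qed
  show "j \<in> A \<Longrightarrow> a / real (card A) \<le> f j" for j
  proof -
    assume j: "j \<in> A"
    have "a / real (card A) \<le> pr j / T"
      using b[OF j] Tle Tpos cpos a by (simp add: frac_le)
    thus ?thesis using j by (simp add: f_def T_def)
  qed
qed



lemma sum_rest:
  fixes g :: "nat \<Rightarrow> real"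
  assumes "finite C" "i \<in> C"
  shows "(\<Sum>j\<in>C. g j) = g i + (\<Sum>j\<in>C - {i}. g j)"
  using assms by (simp add: sum.remove)

lemma half_le: "0 \<le> (a::real) \<Longrightarrow> y \<le> 1/2 \<Longrightarrow> a / 2 \<le> a * (1 - y)"
proof -
  assume "0 \<le> a" "y \<le> 1/2"
  hence "a * (1/2) \<le> a * (1 - y)" by (intro mult_left_mono) auto
  thus ?thesis by simp
qed

lemma core_inv:
  fixes f y :: "nat \<Rightarrow> real"
  assumes C: "finite C" "card C = 4" "i \<in> C"
    and f: "\<And>j. j \<in> C \<Longrightarrow> 0 \<le> f j \<and> f j \<le> 1" and fs: "(\<Sum>j\<in>C. f j) = 1"
    and y: "\<And>j. j \<in> C \<Longrightarrow> 0 \<le> y j \<and> y j \<le> 1/2"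
  defines "S \<equiv> (\<Sum>j\<in>C. (1 - f j) * (1 - y j))"
  defines "R \<equiv> (\<Sum>j\<in>C - {i}. (1 - f j) * (1 - y j))"
  shows "S = (1 - f i) * (1 - y i) + R" "R \<ge> (2 + f i) / 2" "S \<le> 3" "R \<ge> 0"
    and "0 \<le> (1 - f i) * (1 - y i) / S" "(1 - f i) * (1 - y i) / S \<le> 1/2"
    and "f i \<le> 4/7 \<Longrightarrow> 1/14 \<le> (1 - f i) * (1 - y i) / S"
proof -
  show Ss: "S = (1 - f i) * (1 - y i) + R" unfolding S_def R_def using C by (simp add: sum.remove)
  have c3: "card (C - {i}) = 3" using C by simp
  have fr: "(\<Sum>j\<in>C - {i}. f j) = 1 - f i" using fs C by (simp add: sum.remove)
  have "R \<ge> (\<Sum>j\<in>C - {i}. (1 - f j) / 2)" unfolding R_def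
    using f y by (intro sum_mono half_le) auto
  also have "(\<Sum>j\<in>C - {i}. (1 - f j) / 2) = (3 - (1 - f i)) / 2"
    using c3 fr by (simp add: sum_divide_distrib[symmetric] sum_subtractf)
  finally show Rg: "R \<ge> (2 + f i) / 2" by simp
  have "S \<le> (\<Sum>j\<in>C. (1 - f j))" unfolding S_def
    using f y by (intro sum_mono mult_left_le) auto
  also have "\<dots> = 3" using C fs by (simp add: sum_subtractf)
  finally show S3: "S \<le> 3" .
  have fi: "0 \<le> f i" "f i \<le> 1" and yi: "0 \<le> y i" "y i \<le> 1/2" using f y C by auto
  have A0: "0 \<le> (1 - f i) * (1 - y i)" using fi yi by simp
  have A1: "(1 - f i) * (1 - y i) \<le> 1" using fi yi
    by (intro mult_le_one) auto
  show R0: "R \<ge> 0" using Rg fi by simp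
  have Spos: "S > 0" using Ss Rg fi A0 by simp
  show "0 \<le> (1 - f i) * (1 - y i) / S" using A0 Spos by simp
  have "1 \<le> (2 + f i) / 2" using fi by simp
  hence "(1 - f i) * (1 - y i) \<le> R" using A1 Rg by (meson order_trans)
  hence "(1 - f i) * (1 - y i) * 2 \<le> S" using Ss by linarith
  thus "(1 - f i) * (1 - y i) / S \<le> 1/2" using Spos by (simp add: divide_le_eq)
  show "f i \<le> 4/7 \<Longrightarrow> 1/14 \<le> (1 - f i) * (1 - y i) / S"
  proof -
    assume "f i \<le> 4/7"
    hence "(1 - f i) * (1 - y i) \<ge> 3/7 * (1/2)" using yi by (intro mult_mono) auto
    hence "S \<le> 14 * ((1 - f i) * (1 - y i))" using S3 by linarith
    thus ?thesis using Spos by (simp add: le_divide_eq)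
  qed
qed



lemma list2_cases: "length xs = 2 \<Longrightarrow> xs = [xs ! 0, xs ! 1]"
  by (cases xs; cases "tl xs"; auto)

lemma list1_cases: "length xs = 1 \<Longrightarrow> xs = [xs ! 0]"
  by (cases xs) auto

lemma deg2_nbrs:
  assumes vo: "valid_ord ord" and sg: "simple_graph V E" and d: "deg E v = 2"
    and o: "(v1 = ord V E L v ! 0 \<and> v2 = ord V E L v ! 1) \<or> (v1 = ord V E L v ! 1 \<and> v2 = ord V E L v ! 0)"
  shows "nbrs E v = {v1, v2} \<and> v1 \<noteq> v2"
proof -
  let ?ns = "ord V E L v"
  have p: "distinct ?ns" "set ?ns = nbrs E v" "length ?ns = 2" using ord_props[OF vo sg, of L v] d by auto
  have e: "?ns = [?ns ! 0, ?ns ! 1]" using list2_cases[OF p(3)] .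
  have "distinct [?ns ! 0, ?ns ! 1]" "set [?ns ! 0, ?ns ! 1] = nbrs E v" using p e by metis+
  hence "nbrs E v = {?ns ! 0, ?ns ! 1}" "?ns ! 0 \<noteq> ?ns ! 1" by auto
  hence h: "nbrs E v = {?ns ! 0, ?ns ! 1}" "?ns ! 0 \<noteq> ?ns ! 1" .
  from o show ?thesis
  proof
    assume "v1 = ?ns ! 0 \<and> v2 = ?ns ! 1" then show ?thesis using h by simp
  next
    assume "v1 = ?ns ! 1 \<and> v2 = ?ns ! 0" then show ?thesis using h by (simp add: insert_commute)
  qed
qed

lemma deg1_nbr:
  assumes vo: "valid_ord ord" and sg: "simple_graph V E" and d: "deg E v = 1"
  shows "nbrs E v = {ord V E L v ! 0}"
proof -
  let ?ns = "ord V E L v"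
  have p: "set ?ns = nbrs E v" "length ?ns = 1" using ord_props[OF vo sg, of L v] d by auto
  have e: "?ns = [?ns ! 0]" using list1_cases[OF p(2)] .
  show ?thesis using p(1) e by (metis empty_set list.simps(15))
qed

lemma take_distinct: "distinct xs \<Longrightarrow> k < length xs \<Longrightarrow> xs ! k \<notin> set (take k xs)"
proof
  assume d: "distinct xs" "k < length xs" "xs ! k \<in> set (take k xs)"
  then obtain j where j: "j < length (take k xs)" "take k xs ! j = xs ! k" by (auto simp: in_set_conv_nth)
  have "xs ! j = xs ! k" "j < k" using j by auto
  then show False using d(1,2) nth_eq_iff_index_eq by fastforce
qed

lemma good_sg: "good V E L \<Longrightarrow> simple_graph V E" by (simp add: good_def)

lemma good_same: "good V E L \<Longrightarrow> good (delV V v) (delE E v) L"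
  by (rule good_del) auto

lemma card_minus1: "finite A \<Longrightarrow> card A \<le> card (A - {w}) + 1"
proof (cases "w \<in> A")
  case True
  assume "finite A"
  hence "card A = Suc (card (A - {w}))" using True by (rule card.remove)
  thus ?thesis by simp
qed simp

lemma good_fin: "good V E L \<Longrightarrow> u \<in> V \<Longrightarrow> finite (L u)"
  unfolding good_def by (meson finite_atLeastAtMost finite_subset)

lemma reach_grand:
  assumes vo: "valid_ord ord" and g: "good V E L" and v1: "v1 \<in> nbrs E v"
    and us: "us = ord (delV V v) (delE E v) L v1" and k: "k < length us"
  shows "reachable (delV (delV V v) v1) (delE (delE E v) v1) (Lupd L us w k) (us ! k)"
proof -
  have g1: "good (delV V v) (delE E v) L" using good_same[OF g] .
  have sg1: "simple_graph (delV V v) (delE E v)" using good_sg[OF g1] .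
  have p: "distinct us" "set us = nbrs (delE E v) v1" using ord_props[OF vo sg1, of L v1] us by auto
  have g2: "good (delV (delV V v) v1) (delE (delE E v) v1) (Lupd L us w k)"
  proof (rule good_del[OF g1])
    fix u assume u: "u \<in> delV V v" "u \<noteq> v1"
    have fin: "finite (L u)" using good_fin[OF g1 u(1)] .
    show "Lupd L us w k u \<subseteq> L u \<and> card (L u) \<le> card (Lupd L us w k u) + (if u \<in> nbrs (delE E v) v1 then 1 else 0)"
    proof (cases "u \<in> set (take k us)")
      case True
      hence "u \<in> nbrs (delE E v) v1" using p(2) in_set_takeD by fastforce
      then show ?thesis using True fin card_minus1[OF fin, of w] by (auto simp: Lupd_def)
    qed (auto simp: Lupd_def)
  qed
  have uk: "us ! k \<in> nbrs (delE E v) v1" using p k nth_mem by blast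
  have "Lupd L us w k (us ! k) = L (us ! k)" using take_distinct[OF p(1) k] by (simp add: Lupd_def)
  then show ?thesis using reach_child[OF g1 g2 uk] by simp
qed

lemma reach_y:
  assumes g: "good V E L" and n: "nbrs E v = {v1, v2}" "v1 \<noteq> v2"
  shows "reachable (delV V v) (delE E v) (Lupd L [v1, v2] j 1) v2"
proof -
  have g2: "good (delV V v) (delE E v) (Lupd L [v1, v2] j 1)"
  proof (rule good_del[OF g])
    fix u assume u: "u \<in> V" "u \<noteq> v"
    have fin: "finite (L u)" using good_fin[OF g u(1)] .
    show "Lupd L [v1, v2] j 1 u \<subseteq> L u \<and> card (L u) \<le> card (Lupd L [v1, v2] j 1 u) + (if u \<in> nbrs E v then 1 else 0)"
      using n card_minus1[OF fin, of j] by (auto simp: Lupd_def)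
  qed
  have e: "Lupd L [v1, v2] j 1 v2 = L v2" using n by (simp add: Lupd_def)
  have m: "v2 \<in> nbrs E v" using n by simp
  show ?thesis using reach_child[OF g g2 m e] .
qed



lemma prw_bounds:
  assumes vo: "valid_ord ord" and g: "good V E L" and v1: "v1 \<in> nbrs E v"
    and IH: "\<And>V E L v i. reachable V E L v \<Longrightarrow> 0 \<le> Pf ord n V E L v i \<and> Pf ord n V E L v i \<le> 1/2"
  shows "(1/2)^(deg E v1 - 1) \<le> prw ord n V E L v v1 w \<and> prw ord n V E L v v1 w \<le> 1"
proof -
  define us where "us = ord (delV V v) (delE E v) L v1"
  have sg: "simple_graph V E" using good_sg[OF g] .
  have g1: "good (delV V v) (delE E v) L" using good_same[OF g] .
  have sg1: "simple_graph (delV V v) (delE E v)" using good_sg[OF g1] .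
  have v1v: "v1 \<noteq> v" using nbrs_in_V[OF sg v1] by simp
  have vv1: "v \<in> nbrs E v1" using v1 by (simp add: nbrs_sym)
  have len: "length us = deg E v1 - 1"
    using ord_props[OF vo sg1, of L v1] deg_delE[OF sg v1v] vv1 by (simp add: us_def)
  define x where "x = (\<lambda>k. Pf ord n (delV (delV V v) v1) (delE (delE E v) v1) (Lupd L us w k) (us ! k) w)"
  have xb: "k < length us \<Longrightarrow> 0 \<le> x k \<and> x k \<le> 1/2" for k
    unfolding x_def using IH[OF reach_grand[OF vo g v1 us_def]] by blast
  have p: "prw ord n V E L v v1 w = (\<Prod>k<length us. (1 - x k))"
    by (simp add: prw_def us_def x_def Let_def)
  have lo: "(\<Prod>k<length us. (1/2::real)) \<le> (\<Prod>k<length us. (1 - x k))"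
    by (rule prod_mono) (use xb in auto)
  have hi: "(\<Prod>k<length us. (1 - x k)) \<le> 1"
  proof (rule prod_le_1)
    fix k assume "k \<in> {..<length us}"
    hence "0 \<le> x k \<and> x k \<le> 1/2" using xb by simp
    thus "0 \<le> 1 - x k \<and> 1 - x k \<le> 1" by simp
  qed
  show ?thesis using lo hi len p by simp
qed

lemma fw_props:
  assumes vo: "valid_ord ord" and g: "good V E L" and v1: "v1 \<in> nbrs E v"
    and IH: "\<And>V E L v i. reachable V E L v \<Longrightarrow> 0 \<le> Pf ord n V E L v i \<and> Pf ord n V E L v i \<le> 1/2"
  shows "0 \<le> fw ord n V E L v v1 j" "fw ord n V E L v v1 j \<le> 1"
    "(\<Sum>j\<in>colors. fw ord n V E L v v1 j) = 1" "fw ord n V E L v v1 j \<le> 4/7"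
    "deg E v1 \<le> 2 \<Longrightarrow> fw ord n V E L v v1 j \<le> 1/2"
    "j \<in> L v1 \<Longrightarrow> 1/16 \<le> fw ord n V E L v v1 j"
    "j \<notin> L v1 \<Longrightarrow> fw ord n V E L v v1 j = 0"
proof -
  have sg: "simple_graph V E" using good_sg[OF g] .
  have v1V: "v1 \<in> V" using nbrs_in_V[OF sg v1] by simp
  have vv1: "v \<in> nbrs E v1" using v1 by (simp add: nbrs_sym)
  define d where "d = deg E v1"
  have d1: "d \<ge> 1" unfolding d_def using deg_pos[OF sg vv1] .
  have gl: "L v1 \<subseteq> colors" "d \<le> 3" "d + 1 \<le> card (L v1)" using g v1V by (auto simp: good_def d_def)
  have fin: "finite (L v1)" using gl(1) finite_subset by blast
  have c4: "card (L v1) \<le> 4" using card_colors_le[OF gl(1)] .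
  have ne: "L v1 \<noteq> {}" using gl(3) by auto
  define a :: real where "a = (1/2)^(d - 1)"
  have apos: "0 < a" by (simp add: a_def)
  have pb: "\<And>w. w \<in> L v1 \<Longrightarrow> a \<le> prw ord n V E L v v1 w \<and> prw ord n V E L v v1 w \<le> 1"
    using prw_bounds[OF vo g v1 IH] by (simp add: a_def d_def)
  note FB = frac_bounds[where pr="prw ord n V E L v v1" and A="L v1" and a=a, OF fin ne pb apos]
  have fe: "fw ord n V E L v v1 j = (if j \<notin> L v1 then 0 else prw ord n V E L v v1 j / (\<Sum>w\<in>L v1. prw ord n V E L v v1 w))" for j
    by (simp add: fw_def)
  show "0 \<le> fw ord n V E L v v1 j" using FB(1)[where j=j] fe by simp
  show "fw ord n V E L v v1 j \<le> 1" using FB(2)[where j=j] fe by simp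
  show "(\<Sum>j\<in>colors. fw ord n V E L v v1 j) = 1" using FB(3) gl(1) fe by simp
  have ub: "fw ord n V E L v v1 j \<le> 1 / (1 + (real (card (L v1)) - 1) * a)" using FB(4)[where j=j] fe by simp
  have cases3: "d = 1 \<or> d = 2 \<or> d = 3" using d1 gl(2) by auto
  have key: "(real (card (L v1)) - 1) * a \<ge> 3/4 \<and> (d \<le> 2 \<longrightarrow> (real (card (L v1)) - 1) * a \<ge> 1)"
  proof -
    have cr: "real (card (L v1)) \<ge> real d + 1" using gl(3) by linarith
    from cases3 show ?thesis
    proof (elim disjE)
      assume "d = 1" thus ?thesis using cr by (simp add: a_def)
    next
      assume "d = 2" thus ?thesis using cr by (simp add: a_def)
    next
      assume "d = 3" thus ?thesis using cr by (simp add: a_def power2_eq_square)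
    qed
  qed
  have mono: "c \<ge> b \<Longrightarrow> b > 0 \<Longrightarrow> 1 / (1 + c) \<le> 1 / (1 + b)" for b c :: real
    by (simp add: frac_le)
  show "fw ord n V E L v v1 j \<le> 4/7"
  proof -
    have "1 / (1 + (real (card (L v1)) - 1) * a) \<le> 1 / (1 + 3/4)" using key by (intro mono) auto
    thus ?thesis using ub by simp
  qed
  show "deg E v1 \<le> 2 \<Longrightarrow> fw ord n V E L v v1 j \<le> 1/2"
  proof -
    assume "deg E v1 \<le> 2"
    hence "1 / (1 + (real (card (L v1)) - 1) * a) \<le> 1 / (1 + 1)" using key d_def by (intro mono) auto
    thus ?thesis using ub by simp
  qed
  show "j \<in> L v1 \<Longrightarrow> 1/16 \<le> fw ord n V E L v v1 j"
  proof -
    assume j: "j \<in> L v1"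
    have "a \<ge> 1/4"
    proof -
      have "(1/2::real)^(d-1) \<ge> (1/2)^2" using gl(2) by (intro power_decreasing) auto
      thus ?thesis by (simp add: a_def power2_eq_square)
    qed
    hence "a / real (card (L v1)) \<ge> (1/4) / 4" using c4 ne fin
      by (intro frac_le) (auto simp: card_gt_0_iff)
    hence h1: "1/16 \<le> a / real (card (L v1))" by simp
    have h2: "a / real (card (L v1)) \<le> fw ord n V E L v v1 j" using FB(5)[OF _ j] fe j by simp
    show ?thesis using order_trans[OF h1 h2] .
  qed
  show "j \<notin> L v1 \<Longrightarrow> fw ord n V E L v v1 j = 0" by (simp add: fw_def)
qed


lemma Lv_colors: "L \<subseteq> colors \<Longrightarrow> 4 \<le> card L \<Longrightarrow> L = colors"
  by (metis card_atLeastAtMost card_subset_eq finite_atLeastAtMost le_antisym card_colors_le diff_Suc_1 numeral_nat(2) numeral_2_eq_2 numeral_3_eq_3 Suc_numeral)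

lemma yw_bounds:
  assumes g: "good V E L" and n: "nbrs E v = {v1, v2}" "v1 \<noteq> v2"
    and IH: "\<And>V E L v i. reachable V E L v \<Longrightarrow> 0 \<le> Pf ord n V E L v i \<and> Pf ord n V E L v i \<le> 1/2"
  shows "0 \<le> yw ord n V E L v v1 v2 j \<and> yw ord n V E L v v1 v2 j \<le> 1/2"
  unfolding yw_def using IH[OF reach_y[OF g n]] .

lemma frac_bounds_simple:
  fixes x y :: real
  assumes "0 \<le> x" "x \<le> 1/2" "0 \<le> y" "y \<le> 1/2"
  shows "1/5 \<le> (1 - x) / (2 + y)" "(1 - x) / (2 + y) \<le> 1/2" "1/6 \<le> (1 - x) / 3" "(1 - x) / 3 \<le> 1/2"
proof -
  have "1/5 * (2 + y) \<le> 1 - x" using assms by simp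
  thus "1/5 \<le> (1 - x) / (2 + y)" using assms by (simp add: le_divide_eq)
  have "1 - x \<le> 1/2 * (2 + y)" using assms by simp
  thus "(1 - x) / (2 + y) \<le> 1/2" using assms by (simp add: divide_le_eq)
  show "1/6 \<le> (1 - x) / 3" "(1 - x) / 3 \<le> 1/2" using assms by simp_all
qed

lemma INV:
  assumes vo: "valid_ord ord"
  shows "reachable V E L v \<Longrightarrow> 0 \<le> Pf ord n V E L v i \<and> Pf ord n V E L v i \<le> 1/2 \<and>
     (i \<in> L v \<longrightarrow> 1/14 \<le> Pf ord n V E L v i \<and> (deg E v \<le> 1 \<longrightarrow> 1/6 \<le> Pf ord n V E L v i))"
proof (induction n arbitrary: V E L v i)
  case 0
  have c: "2 \<le> card (L v)" "card (L v) \<le> 4" using 0 card_colors_le by (auto simp: reachable_def)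
  hence "real (card (L v)) \<ge> 2" "real (card (L v)) \<le> 4" by linarith+
  hence "1 / real (card (L v)) \<le> 1/2" "1/4 \<le> 1 / real (card (L v))" by (simp_all add: divide_simps)
  then show ?case by auto
next
  case (Suc n)
  have IH0: "\<And>V E L v i. reachable V E L v \<Longrightarrow> 0 \<le> Pf ord n V E L v i \<and> Pf ord n V E L v i \<le> 1/2"
    using Suc.IH by blast
  have R: "good V E L" "v \<in> V" "deg E v \<le> 2" "deg E v + 2 \<le> card (L v)" using Suc.prems unfolding reach_good by auto
  have sg: "simple_graph V E" using good_sg[OF R(1)] .
  have LC: "L v \<subseteq> colors" using R(1,2) by (auto simp: good_def)
  have c4: "card (L v) \<le> 4" using card_colors_le[OF LC] .
  show ?case
  proof (cases "i \<in> L v")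
    case False
    then show ?thesis using Pf_notin[of i L v ord "Suc n" V E] by simp
  next
    case iL: True
    consider "deg E v = 0" | "deg E v = 1" | "deg E v = 2" using R(3) by linarith
    then show ?thesis
    proof cases
      case 1
      have "real (card (L v)) \<ge> 2" "real (card (L v)) \<le> 4" using R(4) c4 1 by linarith+
      hence "1 / real (card (L v)) \<le> 1/2" "1/4 \<le> 1 / real (card (L v))" by (simp_all add: divide_simps)
      then show ?thesis unfolding Pf_deg0[OF 1] using iL 1 by auto
    next
      case 2
      define v1 where "v1 = ord V E L v ! 0"
      have nb: "nbrs E v = {v1}" using deg1_nbr[OF vo sg 2] v1_def by simp
      have rc: "reachable (delV V v) (delE E v) L v1"
        using reach_child[OF R(1) good_same[OF R(1)], of v1] nb by simp
      define x where "x = Pf ord n (delV V v) (delE E v) L v1 i"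
      define y where "y = Pf ord n (delV V v) (delE E v) L v1 (the_elem (colors - L v))"
      have xb: "0 \<le> x" "x \<le> 1/2" using IH0[OF rc] x_def by auto
      have yb: "0 \<le> y" "y \<le> 1/2" using IH0[OF rc] y_def by auto
      have "card (L v) = 3 \<or> card (L v) = 4" using R(4) c4 2 by linarith
      then show ?thesis
      proof
        assume c: "card (L v) = 3"
        have eq: "Pf ord (Suc n) V E L v i = (1 - x) / (2 + y)"
          using Pf_deg1_3[where L=L and v=v and i=i and E=E and ord=ord and V=V and n=n, OF iL 2 c] by (simp add: x_def y_def v1_def)
        show ?thesis unfolding eq using frac_bounds_simple[OF xb yb] by (intro conjI impI) linarith+
      next
        assume c: "card (L v) = 4"
        have eq: "Pf ord (Suc n) V E L v i = (1 - x) / 3"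
          using Pf_deg1_4[where L=L and v=v and i=i and E=E and ord=ord and V=V and n=n, OF iL 2 c] by (simp add: x_def v1_def)
        show ?thesis unfolding eq using frac_bounds_simple[OF xb yb] by (intro conjI impI) linarith+
      qed
    next
      case 3
      obtain v1 v2 where o: "(v1 = ord V E L v ! 0 \<and> v2 = ord V E L v ! 1) \<or> (v1 = ord V E L v ! 1 \<and> v2 = ord V E L v ! 0)"
        and pe: "Pf ord (Suc n) V E L v i = F2 ord n V E L v v1 v2 i"
        using Pf_deg2[where L=L and v=v and i=i and E=E and ord=ord and V=V and n=n, OF iL 3] by blast
      have nb: "nbrs E v = {v1, v2}" "v1 \<noteq> v2" using deg2_nbrs[OF vo sg 3 o] by auto
      have v1n: "v1 \<in> nbrs E v" using nb by simp
      have Lc: "L v = colors" using Lv_colors[OF LC] R(4) 3 by simp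
      note FP = fw_props[OF vo R(1) v1n IH0]
      note YB = yw_bounds[OF R(1) nb IH0]
      have fC: "\<And>j. j \<in> colors \<Longrightarrow> 0 \<le> fw ord n V E L v v1 j \<and> fw ord n V E L v v1 j \<le> 1"
        using FP(1,2) by blast
      have ic: "i \<in> colors" using iL Lc by simp
      note CI = core_inv[where f="fw ord n V E L v v1" and y="yw ord n V E L v v1 v2",
          OF finite_atLeastAtMost _ ic fC FP(3) YB]
      have F2e: "F2 ord n V E L v v1 v2 i = (1 - fw ord n V E L v v1 i) * (1 - yw ord n V E L v v1 v2 i) /
          (\<Sum>j\<in>colors. (1 - fw ord n V E L v v1 j) * (1 - yw ord n V E L v v1 v2 j))"
        by (simp add: F2_def Lc)
      show ?thesis unfolding pe F2e using CI(5,6,7) FP(4) 3 by simp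
    qed
  qed
qed



lemma P01: "valid_ord ord \<Longrightarrow> reachable V E L v \<Longrightarrow> 0 \<le> Pf ord n V E L v i \<and> Pf ord n V E L v i \<le> 1/2"
proof -
  assume a: "valid_ord ord" "reachable V E L v"
  note h = INV[OF a(1) a(2), of n i]
  show ?thesis using h by blast
qed

lemma LB14: "valid_ord ord \<Longrightarrow> reachable V E L v \<Longrightarrow> i \<in> L v \<Longrightarrow> 1/14 \<le> Pf ord n V E L v i"
proof -
  assume a: "valid_ord ord" "reachable V E L v" "i \<in> L v"
  note h = INV[OF a(1) a(2), of n i]
  show ?thesis using h a(3) by blast
qed

lemma LB6: "valid_ord ord \<Longrightarrow> reachable V E L v \<Longrightarrow> i \<in> L v \<Longrightarrow> deg E v \<le> 1 \<Longrightarrow> 1/6 \<le> Pf ord n V E L v i"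
proof -
  assume a: "valid_ord ord" "reachable V E L v" "i \<in> L v" "deg E v \<le> 1"
  note h = INV[OF a(1) a(2), of n i]
  show ?thesis using h a(3,4) by blast
qed

lemma card_colors: "card colors = 4" by simp

lemma colors_minus3: "i \<in> colors \<Longrightarrow> card (colors - {i}) = 3"
  by simp

lemma the_elem_single: "A \<subseteq> colors \<Longrightarrow> card A = 3 \<Longrightarrow> \<exists>j. colors - A = {j} \<and> j \<in> colors"
proof -
  assume a: "A \<subseteq> colors" "card A = 3"
  have "card (colors - A) = 1" using a by (simp add: card_Diff_subset finite_subset)
  then obtain j where "colors - A = {j}" by (meson card_1_singletonE)
  thus ?thesis by auto
qed

lemma main1:
  assumes vo: "valid_ord ord" and R: "reachable V E L v" and d: "deg E v = 1" and ic: "i \<in> colors"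
  defines "v1 \<equiv> ord V E L v ! 0"
  defines "H \<equiv> i \<in> L v \<and> card (L v) = 3 \<and> i \<notin> L v1 \<and> the_elem (colors - L v) \<notin> L v1"
  shows "H \<Longrightarrow> Pf ord (Suc n) V E L v i = 1/2"
    and "\<not> H \<Longrightarrow> Pf ord (Suc n) V E L v i \<le> 6/13"
    and "nbrs E v = {v1}"
    and "H \<Longrightarrow> the_elem (colors - L v) \<in> colors \<and> the_elem (colors - L v) \<noteq> i \<and> the_elem (colors - L v) \<notin> L v"
proof -
  have Rg: "good V E L" "v \<in> V" "deg E v + 2 \<le> card (L v)" using R unfolding reach_good by auto
  have sg: "simple_graph V E" using good_sg[OF Rg(1)] .
  have LC: "L v \<subseteq> colors" using Rg(1,2) by (auto simp: good_def)
  have c4: "card (L v) \<le> 4" using card_colors_le[OF LC] .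
  show nb: "nbrs E v = {v1}" using deg1_nbr[OF vo sg d] v1_def by simp
  have rc: "reachable (delV V v) (delE E v) L v1"
    using reach_child[OF Rg(1) good_same[OF Rg(1)], of v1] nb by simp
  define j0 where "j0 = the_elem (colors - L v)"
  define x where "x = Pf ord n (delV V v) (delE E v) L v1 i"
  define y where "y = Pf ord n (delV V v) (delE E v) L v1 j0"
  have xb: "0 \<le> x" "x \<le> 1/2" using P01[OF vo rc] x_def by auto
  have yb: "0 \<le> y" "y \<le> 1/2" using P01[OF vo rc] y_def by auto
  have j0p: "card (L v) = 3 \<Longrightarrow> j0 \<in> colors \<and> j0 \<notin> L v"
  proof -
    assume "card (L v) = 3"
    then obtain j where "colors - L v = {j}" "j \<in> colors" using the_elem_single[OF LC] by blast
    thus ?thesis by (auto simp: j0_def)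
  qed
  show "H \<Longrightarrow> the_elem (colors - L v) \<in> colors \<and> the_elem (colors - L v) \<noteq> i \<and> the_elem (colors - L v) \<notin> L v"
    using j0p unfolding H_def j0_def[symmetric] by auto
  show "H \<Longrightarrow> Pf ord (Suc n) V E L v i = 1/2"
  proof -
    assume H: H
    have e: "Pf ord (Suc n) V E L v i = (1 - x) / (2 + y)"
      using Pf_deg1_3[where L=L and v=v and i=i and E=E and ord=ord and V=V and n=n] H d
      by (simp add: H_def x_def y_def j0_def v1_def)
    have "x = 0" "y = 0" using H Pf_notin unfolding H_def x_def y_def j0_def by auto
    thus ?thesis using e by simp
  qed
  show "\<not> H \<Longrightarrow> Pf ord (Suc n) V E L v i \<le> 6/13"
  proof -
    assume nH: "\<not> H"
    show ?thesis
    proof (cases "i \<in> L v")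
      case False
      thus ?thesis using Pf_notin[of i L v ord "Suc n" V E] by simp
    next
      case iL: True
      have "card (L v) = 3 \<or> card (L v) = 4" using Rg(3) c4 d by linarith
      thus ?thesis
      proof
        assume c: "card (L v) = 4"
        have e: "Pf ord (Suc n) V E L v i = (1 - x) / 3"
          using Pf_deg1_4[where L=L and v=v and i=i and E=E and ord=ord and V=V and n=n, OF iL d c]
          by (simp add: x_def v1_def)
        show ?thesis unfolding e using xb by simp
      next
        assume c: "card (L v) = 3"
        have e: "Pf ord (Suc n) V E L v i = (1 - x) / (2 + y)"
          using Pf_deg1_3[where L=L and v=v and i=i and E=E and ord=ord and V=V and n=n, OF iL d c]
          by (simp add: x_def y_def j0_def v1_def)
        have j0c: "j0 \<in> colors" using j0p[OF c] by simp
        have alt: "i \<in> L v1 \<or> j0 \<in> L v1" using nH iL c unfolding H_def j0_def by auto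
        have rc2: "deg (delE E v) v1 \<le> 2" "deg (delE E v) v1 + 2 \<le> card (L v1)" "L v1 \<subseteq> colors"
          using rc unfolding reach_good good_def by auto
        have key: "1 \<le> 13 * x + 6 * y"
        proof (cases "deg (delE E v) v1 \<le> 1")
          case True
          from alt show ?thesis
          proof
            assume "i \<in> L v1"
            hence "1/6 \<le> x" using LB6[OF vo rc _ True] x_def by simp
            thus ?thesis using yb by linarith
          next
            assume "j0 \<in> L v1"
            hence "1/6 \<le> y" using LB6[OF vo rc _ True] y_def by simp
            thus ?thesis using xb by linarith
          qed
        next
          case False
          hence "L v1 = colors" using Lv_colors[OF rc2(3)] rc2(1,2) by simp
          hence "1/14 \<le> x" "1/14 \<le> y" using LB14[OF vo rc] x_def y_def ic j0c by auto
          thus ?thesis by linarith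
        qed
        have "(1 - x) * 13 \<le> 6 * (2 + y)" using key by (simp add: algebra_simps)
        thus ?thesis unfolding e using yb by (simp add: divide_le_eq)
      qed
    qed
  qed
qed



lemma good_y:
  assumes g: "good V E L" and n: "nbrs E v = {v1, v2}"
  shows "good (delV V v) (delE E v) (Lupd L [v1, v2] j 1)"
proof (rule good_del[OF g])
  fix u assume u: "u \<in> V" "u \<noteq> v"
  have fin: "finite (L u)" using good_fin[OF g u(1)] .
  show "Lupd L [v1, v2] j 1 u \<subseteq> L u \<and> card (L u) \<le> card (Lupd L [v1, v2] j 1 u) + (if u \<in> nbrs E v then 1 else 0)"
    using n card_minus1[OF fin, of j] by (auto simp: Lupd_def)
qed

lemma term_bd:
  fixes X Z ax az :: real
  assumes "X \<le> 1" "0 \<le> az" "ax \<le> X" "az \<le> Z" "ax \<le> 1"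
  shows "1/2 - (1 - ax) / (2 + az) \<le> 1/2 - (1 - X) / (2 + Z)"
proof -
  have "(1 - X) / (2 + Z) \<le> (1 - ax) / (2 + az)"
    using assms by (intro frac_le) auto
  thus ?thesis by simp
qed

lemma alg_a:
  fixes fi yi R :: real
  assumes "0 \<le> fi" "fi \<le> 1" "0 \<le> yi" "yi \<le> 1" "R \<ge> (2 + fi) / 2" "fi \<ge> 1/16 \<or> yi \<ge> 1/14"
  shows "(1 - fi) * (1 - yi) / ((1 - fi) * (1 - yi) + R) \<le> 13/27"
proof -
  define A where "A = (1 - fi) * (1 - yi)"
  have A0: "0 \<le> A" using assms by (simp add: A_def)
  have key: "28 * A \<le> 13 * (2 + fi)"
    using assms(6)
  proof
    assume h: "fi \<ge> 1/16"
    have "A \<le> 1 - fi" unfolding A_def using assms by (intro mult_left_le) auto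
    thus ?thesis using h by (simp add: algebra_simps)
  next
    assume h: "yi \<ge> 1/14"
    have "A \<le> (1 - fi) * (13/14)" unfolding A_def using assms h by (intro mult_left_mono) auto
    thus ?thesis using assms by (simp add: algebra_simps)
  qed
  have R2: "2 + fi \<le> 2 * R" using assms(5) by (simp add: field_simps)
  have Rp: "R \<ge> 1" using R2 assms(1) by linarith
  have "27 * A \<le> 13 * A + 13 * R" using key R2 by (simp add: algebra_simps)
  hence "27 * A \<le> 13 * (A + R)" by (simp add: algebra_simps)
  hence "A / (A + R) \<le> 13/27" using A0 Rp by (simp add: divide_le_eq)
  thus ?thesis by (simp add: A_def)
qed

lemma alg_c:
  fixes f y :: "nat \<Rightarrow> real"
  assumes C: "finite C" "card C = 4" "i \<in> C"
    and fi: "f i = 0" and yi: "y i = 0"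
    and f: "\<And>j. j \<in> C \<Longrightarrow> 0 \<le> f j \<and> f j \<le> 1/2" and fs: "(\<Sum>j\<in>C. f j) = 1"
    and y: "\<And>j. j \<in> C \<Longrightarrow> y j \<le> 1/2"
    and ys: "(\<Sum>j\<in>C - {i}. (1/2 - y j)) \<ge> 2/13"
  shows "(1 - f i) * (1 - y i) / (\<Sum>j\<in>C. (1 - f j) * (1 - y j)) \<le> 13/27"
proof -
  have c3: "card (C - {i}) = 3" using C by simp
  have fr: "(\<Sum>j\<in>C - {i}. f j) = 1" using fs C fi by (simp add: sum.remove)
  have t: "(1 - f j) * (1 - y j) \<ge> (1 - f j) / 2 + (1/2) * (1/2 - y j)" if j: "j \<in> C" for j
  proof -
    have "(1/2) * (1/2 - y j) \<le> (1 - f j) * (1/2 - y j)" using f[OF j] y[OF j] by (intro mult_right_mono) auto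
    moreover have "(1 - f j) * (1 - y j) = (1 - f j) / 2 + (1 - f j) * (1/2 - y j)" by (simp add: algebra_simps)
    ultimately show ?thesis by linarith
  qed
  have "(\<Sum>j\<in>C - {i}. (1 - f j) * (1 - y j)) \<ge> (\<Sum>j\<in>C - {i}. (1 - f j) / 2 + (1/2) * (1/2 - y j))"
    using t by (intro sum_mono) auto
  also have "(\<Sum>j\<in>C - {i}. (1 - f j) / 2 + (1/2) * (1/2 - y j)) =
      (\<Sum>j\<in>C - {i}. (1 - f j)) / 2 + (1/2) * (\<Sum>j\<in>C - {i}. (1/2 - y j))"
    by (simp add: sum.distrib sum_divide_distrib sum_distrib_left)
  also have "(\<Sum>j\<in>C - {i}. (1 - f j)) = 2" using c3 fr by (simp add: sum_subtractf)
  finally have R: "(\<Sum>j\<in>C - {i}. (1 - f j) * (1 - y j)) \<ge> 14/13" using ys by linarith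
  have S: "(\<Sum>j\<in>C. (1 - f j) * (1 - y j)) = 1 + (\<Sum>j\<in>C - {i}. (1 - f j) * (1 - y j))"
    using C fi yi by (simp add: sum.remove)
  show ?thesis unfolding S using R fi yi by (simp add: divide_le_eq)
qed


lemma sum_C3:
  fixes g :: "nat \<Rightarrow> real"
  assumes "i \<in> colors" "\<And>j. j \<in> colors - {i} \<Longrightarrow> c \<le> g j"
  shows "3 * c \<le> (\<Sum>j\<in>colors - {i}. g j)"
proof -
  have m: "(\<Sum>j\<in>colors - {i}. c) \<le> (\<Sum>j\<in>colors - {i}. g j)" using assms(2) by (intro sum_mono) auto
  have eq: "(\<Sum>j\<in>colors - {i}. c) = 3 * c" using colors_minus3[OF assms(1)] by simp
  show ?thesis using m unfolding eq .
qed

lemma case_c_y: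
  assumes vo: "valid_ord ord" and g: "good V E L" and vV: "v \<in> V"
    and nb: "nbrs E v = {v1, v2}" "v1 \<noteq> v2" and ne: "{v1, v2} \<notin> E"
    and i1: "i \<notin> L v1" and i2: "i \<notin> L v2" and ic: "i \<in> colors"
  shows "(\<Sum>j\<in>colors - {i}. (1/2 - yw ord (Suc n) V E L v v1 v2 j)) \<ge> 2/13"
proof -
  define C' where "C' = colors - {i}"
  define V' where "V' = delV V v"
  define E' where "E' = delE E v"
  define Lj where "Lj = (\<lambda>j. Lupd L [v1, v2] j 1)"
  have sg: "simple_graph V E" using good_sg[OF g] .
  have v2n: "v2 \<in> nbrs E v" using nb by simp
  have v2V: "v2 \<in> V" "v2 \<noteq> v" using nbrs_in_V[OF sg v2n] by auto
  have vv2: "v \<in> nbrs E v2" using v2n by (simp add: nbrs_sym)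
  have v1n2: "v1 \<notin> nbrs E v2" using ne by (simp add: nbrs_def)
  have gl: "L v2 \<subseteq> colors" "deg E v2 \<le> 3" "deg E v2 + 1 \<le> card (L v2)" using g v2V by (auto simp: good_def)
  have LC': "L v2 \<subseteq> C'" using gl(1) i2 by (auto simp: C'_def)
  have finC': "finite C'" by (simp add: C'_def)
  have cC': "card C' = 3" using ic by (simp add: C'_def)
  have c3: "card (L v2) \<le> 3" using card_mono[OF finC' LC'] cC' by simp
  have d1: "deg E v2 \<ge> 1" using deg_pos[OF sg vv2] .
  have Ljv2: "\<And>j. Lj j v2 = L v2" using nb by (simp add: Lj_def Lupd_def)
  have dE': "deg E' v2 = deg E v2 - 1" using deg_delE[OF sg v2V(2)] vv2 by (simp add: E'_def)
  have sg': "simple_graph V' E'" unfolding V'_def E'_def using simple_del[OF sg] .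
  have yw_eq: "\<And>j. yw ord (Suc n) V E L v v1 v2 j = Pf ord (Suc n) V' E' (Lj j) v2 j"
    by (simp add: yw_def V'_def E'_def Lj_def)
  have "deg E v2 = 1 \<or> deg E v2 = 2" using d1 gl(3) c3 by linarith
  then show ?thesis
  proof
    assume d: "deg E v2 = 1"
    hence d0: "deg E' v2 = 0" using dE' by simp
    define c where "c = card (L v2)"
    have cpos: "real c \<ge> 2" using gl(3) d c_def by simp
    have ye: "\<And>j. yw ord (Suc n) V E L v v1 v2 j = (if j \<in> L v2 then 1 / real c else 0)"
      using yw_eq Pf_deg0[OF d0] Ljv2 c_def by simp
    have "(\<Sum>j\<in>C'. yw ord (Suc n) V E L v v1 v2 j) = (\<Sum>j\<in>C'. (if j \<in> L v2 then 1 / real c else 0))"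
      using ye by simp
    also have "\<dots> = (\<Sum>j\<in>L v2. 1 / real c)"
      by (rule sum.mono_neutral_cong_right[OF finC' LC']) auto
    also have "\<dots> = 1" using cpos by (simp add: c_def)
    finally have s1: "(\<Sum>j\<in>C'. yw ord (Suc n) V E L v v1 v2 j) = 1" .
    have "(\<Sum>j\<in>C'. (1/2 - yw ord (Suc n) V E L v v1 v2 j)) = 3/2 - 1"
      using s1 cC' by (simp add: sum_subtractf)
    thus ?thesis by (simp add: C'_def)
  next
    assume d: "deg E v2 = 2"
    have d1': "deg E' v2 = 1" using dE' d by simp
    have cL: "card (L v2) = 3" using d gl(3) c3 by simp
    have Lv2: "L v2 = C'" using card_subset_eq[OF finC' LC'] cL cC' by simp
    have "card (nbrs E' v2) = 1" using d1' by (simp add: deg_def)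
    then obtain u where nu: "nbrs E' v2 = {u}" by (meson card_1_singletonE)
    have un: "u \<in> nbrs E v2" "u \<noteq> v" using nu nbrs_delE[OF v2V(2), of E] by (auto simp: E'_def)
    have uv1: "u \<noteq> v1" using un(1) v1n2 by auto
    have Lju: "\<And>j. Lj j u = L u" using uv1 nb un by (simp add: Lj_def Lupd_def)
    define V'' where "V'' = delV V' v2"
    define E'' where "E'' = delE E' v2"
    have gj: "\<And>j. good V' E' (Lj j)" unfolding V'_def E'_def Lj_def using good_y[OF g nb(1)] .
    have rch: "\<And>j. reachable V'' E'' (Lj j) u"
    proof -
      fix j
      have un': "u \<in> nbrs E' v2" using nu by simp
      show "reachable V'' E'' (Lj j) u" unfolding V''_def E''_def
        using reach_child[OF gj[of j] good_same[OF gj[of j]] un' refl] .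
    qed
    have ufacts: "deg E'' u \<le> 2" "deg E'' u + 2 \<le> card (L u)" "L u \<subseteq> colors"
      using rch[of i] Lju[of i] unfolding reach_good good_def by auto
    have ord_u: "\<And>j. ord V' E' (Lj j) v2 ! 0 = u" using deg1_nbr[OF vo sg' d1'] nu by (metis singleton_inject)
    have te: "the_elem (colors - L v2) = i" using Lv2 ic by (simp add: C'_def Diff_Diff_Int)
    define X where "X = (\<lambda>j. Pf ord n V'' E'' (Lj j) u j)"
    define Z where "Z = (\<lambda>j. Pf ord n V'' E'' (Lj j) u i)"
    have ye: "\<And>j. j \<in> C' \<Longrightarrow> yw ord (Suc n) V E L v v1 v2 j = (1 - X j) / (2 + Z j)"
    proof -
      fix j assume j: "j \<in> C'"
      have jL: "j \<in> Lj j v2" using j Lv2 Ljv2 by simp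
      have c3': "card (Lj j v2) = 3" using cL Ljv2 by simp
      note e2 = Pf_deg1_3[where L="Lj j" and v=v2 and i=j and E=E' and ord=ord and V=V' and n=n, OF jL d1' c3']
      show "yw ord (Suc n) V E L v v1 v2 j = (1 - X j) / (2 + Z j)"
        by (simp only: yw_eq e2 X_def Z_def ord_u Ljv2 te V''_def E''_def)
    qed
    have Xb: "\<And>j. 0 \<le> X j \<and> X j \<le> 1/2" using P01[OF vo rch] by (simp add: X_def)
    have Zb: "\<And>j. 0 \<le> Z j \<and> Z j \<le> 1/2" using P01[OF vo rch] by (simp add: Z_def)
    show ?thesis
    proof (cases "deg E'' u \<le> 1")
      case False
      hence "L u = colors" using Lv_colors[OF ufacts(3)] ufacts(1,2) by simp
      hence XZ: "\<And>j. j \<in> colors \<Longrightarrow> 1/14 \<le> X j \<and> 1/14 \<le> Z j"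
        using LB14[OF vo rch] Lju ic by (simp add: X_def Z_def)
      have "\<And>j. j \<in> colors - {i} \<Longrightarrow> 3/58 \<le> 1/2 - yw ord (Suc n) V E L v v1 v2 j"
      proof -
        fix j assume j: "j \<in> colors - {i}"
        have "1/2 - (1 - 1/14) / (2 + 1/14) \<le> 1/2 - (1 - X j) / (2 + Z j)"
          using Xb[of j] Zb[of j] XZ[of j] j by (intro term_bd) auto
        thus "3/58 \<le> 1/2 - yw ord (Suc n) V E L v v1 v2 j" using ye[of j] j by (simp add: C'_def)
      qed
      hence "3 * (3/58) \<le> (\<Sum>j\<in>colors - {i}. 1/2 - yw ord (Suc n) V E L v v1 v2 j)"
        by (intro sum_C3[OF ic]) auto
      thus ?thesis by simp
    next
      case True
      define bj where "bj = (\<lambda>j. of_bool (j \<in> L u) / 13 + of_bool (i \<in> L u) / (26::real))"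
      have tb: "\<And>j. j \<in> colors - {i} \<Longrightarrow> bj j \<le> 1/2 - yw ord (Suc n) V E L v v1 v2 j"
      proof -
        fix j assume j: "j \<in> colors - {i}"
        define ax :: real where "ax = (if j \<in> L u then 1/6 else 0)"
        define az :: real where "az = (if i \<in> L u then 1/6 else 0)"
        have xa: "ax \<le> X j" using LB6[OF vo rch _ True, of j] Lju Xb[of j] by (auto simp: ax_def X_def)
        have za: "az \<le> Z j" using LB6[OF vo rch _ True, of i] Lju Zb[of j] by (auto simp: az_def Z_def)
        have "1/2 - (1 - ax) / (2 + az) \<le> 1/2 - (1 - X j) / (2 + Z j)"
          using Xb[of j] xa za by (intro term_bd) (auto simp: ax_def az_def)
        moreover have "bj j \<le> 1/2 - (1 - ax) / (2 + az)"
          by (cases "j \<in> L u"; cases "i \<in> L u") (simp_all add: bj_def ax_def az_def)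
        ultimately show "bj j \<le> 1/2 - yw ord (Suc n) V E L v v1 v2 j" using ye[of j] j by (simp add: C'_def)
      qed
      have "(\<Sum>j\<in>colors - {i}. bj j) \<le> (\<Sum>j\<in>colors - {i}. 1/2 - yw ord (Suc n) V E L v v1 v2 j)"
        using tb by (intro sum_mono) auto
      moreover have "(\<Sum>j\<in>colors - {i}. bj j) = real (card ((colors - {i}) \<inter> L u)) / 13 + 3 * of_bool (i \<in> L u) / 26"
      proof -
        have s1: "(\<Sum>j\<in>colors - {i}. bj j) = (\<Sum>j\<in>colors - {i}. of_bool (j \<in> L u) / (13::real)) + (\<Sum>j\<in>colors - {i}. of_bool (i \<in> L u) / (26::real))"
          unfolding bj_def by (rule sum.distrib)
        have s2: "(\<Sum>j\<in>colors - {i}. of_bool (j \<in> L u) / (13::real)) = (\<Sum>j\<in>colors - {i}. of_bool (j \<in> L u)) / 13"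
          by (rule sum_divide_distrib[symmetric])
        have s3: "(\<Sum>j\<in>colors - {i}. of_bool (j \<in> L u) :: real) = real (card ((colors - {i}) \<inter> {j. j \<in> L u}))"
          by simp
        have s4: "(colors - {i}) \<inter> {j. j \<in> L u} = (colors - {i}) \<inter> L u" by auto
        have s5: "(\<Sum>j\<in>colors - {i}. of_bool (i \<in> L u) / (26::real)) = 3 * of_bool (i \<in> L u) / 26"
          using colors_minus3[OF ic] by simp
        show ?thesis unfolding s1 s2 s3 s4 s5 ..
      qed
      moreover have ce: "(colors - {i}) \<inter> L u = L u - {i}" using ufacts(3) by auto
      moreover have cc: "real (card (L u - {i})) = real (card (L u)) - of_bool (i \<in> L u)"
      proof (cases "i \<in> L u")
        case True
        have fin: "finite (L u)" using ufacts(3) finite_subset by blast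
        have "card (L u) \<ge> 1" using True fin by (metis One_nat_def Suc_leI card_gt_0_iff empty_iff)
        thus ?thesis using True fin by (simp add: card_Diff_singleton of_nat_diff)
      next
        case False
        thus ?thesis by simp
      qed
      moreover have c2: "real (card (L u)) \<ge> 2" using ufacts(2) by simp
      moreover have "2/13 \<le> (real (card (L u)) - of_bool (i \<in> L u)) / 13 + 3 * of_bool (i \<in> L u) / 26"
        using c2 by (cases "i \<in> L u") (simp_all add: field_simps)
      ultimately show ?thesis by (simp only: ce cc)
    qed
  qed
qed


lemma tri_facts:
  assumes g: "good V E L" and wV: "w \<in> V" and a: "v \<in> nbrs E w" "q \<in> nbrs E w" "v \<noteq> q"
    and iw: "i \<notin> L w" and ic: "i \<in> colors"
  shows "nbrs E w = {v, q} \<and> deg E w = 2 \<and> L w = colors - {i}"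
proof -
  have sg: "simple_graph V E" using good_sg[OF g] .
  have fin: "finite (nbrs E w)" using finite_nbrs[OF sg] .
  have sub: "{v, q} \<subseteq> nbrs E w" using a by auto
  have d2: "deg E w \<ge> 2" unfolding deg_def using card_mono[OF fin sub] a(3) by simp
  have gl: "L w \<subseteq> colors" "deg E w + 1 \<le> card (L w)" using g wV by (auto simp: good_def)
  have LC: "L w \<subseteq> colors - {i}" using gl(1) iw by auto
  have cC: "card (colors - {i}) = 3" using colors_minus3[OF ic] .
  have c3: "card (L w) \<le> 3" using card_mono[OF _ LC] cC by simp
  have dd: "deg E w = 2" using d2 gl(2) c3 by linarith
  have cL: "card (L w) = 3" using dd gl(2) c3 by linarith
  have Lw: "L w = colors - {i}" using card_subset_eq[OF _ LC] cL cC by simp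
  have "card {v, q} = 2" using a(3) by simp
  hence "{v, q} = nbrs E w" using card_subset_eq[OF fin sub] dd by (simp add: deg_def)
  thus ?thesis using dd Lw by simp
qed

lemma case_b:
  assumes vo: "valid_ord ord" and g: "good V E L" and vV: "v \<in> V"
    and nb: "nbrs E v = {v1, v2}" "v1 \<noteq> v2" and e: "{v1, v2} \<in> E"
    and i1: "i \<notin> L v1" and i2: "i \<notin> L v2" and ic: "i \<in> colors" and Lc: "L v = colors"
  shows "F2 ord (Suc n) V E L v v1 v2 i = 1/2"
proof -
  define C' where "C' = colors - {i}"
  define V' where "V' = delV V v"
  define E' where "E' = delE E v"
  define V'' where "V'' = delV V' v1"
  define E'' where "E'' = delE E' v1"
  define Lj where "Lj = (\<lambda>j. Lupd L [v1, v2] j 1)"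
  have sg: "simple_graph V E" using good_sg[OF g] .
  have v1n: "v1 \<in> nbrs E v" and v2n: "v2 \<in> nbrs E v" using nb by auto
  have v1V: "v1 \<in> V" "v1 \<noteq> v" using nbrs_in_V[OF sg v1n] by auto
  have v2V: "v2 \<in> V" "v2 \<noteq> v" using nbrs_in_V[OF sg v2n] by auto
  have e21: "v2 \<in> nbrs E v1" using e by (simp add: nbrs_def insert_commute)
  have e12: "v1 \<in> nbrs E v2" using e by (simp add: nbrs_def)
  have vv1: "v \<in> nbrs E v1" using v1n by (simp add: nbrs_sym)
  have vv2: "v \<in> nbrs E v2" using v2n by (simp add: nbrs_sym)
  have nv2: "v \<noteq> v2" and nv1: "v \<noteq> v1" using v2V(2) v1V(2) by auto
  have T1: "nbrs E v1 = {v, v2} \<and> deg E v1 = 2 \<and> L v1 = C'"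
    using tri_facts[OF g v1V(1) vv1 e21 nv2 i1 ic] by (simp add: C'_def)
  have T2: "nbrs E v2 = {v, v1} \<and> deg E v2 = 2 \<and> L v2 = C'"
    using tri_facts[OF g v2V(1) vv2 e12 nv1 i2 ic] by (simp add: C'_def)
  have sg': "simple_graph V' E'" unfolding V'_def E'_def using simple_del[OF sg] .
  have nE'1: "nbrs E' v1 = {v2}" using T1 nbrs_delE[OF v1V(2), of E] v2V(2) by (auto simp: E'_def)
  have nE'2: "nbrs E' v2 = {v1}" using T2 nbrs_delE[OF v2V(2), of E] v1V(2) by (auto simp: E'_def)
  define us where "us = ord V' E' L v1"
  have usp: "distinct us" "set us = {v2}" using ord_props[OF vo sg', of L v1] nE'1 by (auto simp: us_def)
  have us1: "us = [v2]"
  proof -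
    have "length us = 1" using usp distinct_card[OF usp(1)] by simp
    thus ?thesis using usp(2) list1_cases by (metis empty_set list.simps(15) singleton_inject)
  qed
  have nE''2: "nbrs E'' v2 = {}" using nE'2 nbrs_delE[OF nb(2)[symmetric], of E'] by (simp add: E''_def)
  have d0: "deg E'' v2 = 0" using nE''2 by (simp add: deg_def)
  have L0: "Lupd L [v2] w 0 = L" for w by (rule ext) (simp add: Lupd_def)
  have cC: "card C' = 3" using colors_minus3[OF ic] by (simp add: C'_def)
  have prw: "w \<in> C' \<Longrightarrow> prw ord (Suc n) V E L v v1 w = 2/3" for w
  proof -
    assume w: "w \<in> C'"
    have "prw ord (Suc n) V E L v v1 w = (\<Prod>k<length us. 1 - Pf ord (Suc n) V'' E'' (Lupd L us w k) (us ! k) w)"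
      by (simp only: prw_def Let_def us_def V'_def E'_def V''_def E''_def)
    also have "\<dots> = 1 - Pf ord (Suc n) V'' E'' L v2 w" by (simp del: Pf.simps add: us1 L0)
    also have "\<dots> = 1 - 1/3" using Pf_deg0[OF d0, of ord "Suc n" V'' L w] T2 w cC by simp
    finally show ?thesis by simp
  qed
  have fw: "j \<in> C' \<Longrightarrow> fw ord (Suc n) V E L v v1 j = 1/3" for j
  proof -
    assume j: "j \<in> C'"
    have "(\<Sum>w\<in>C'. prw ord (Suc n) V E L v v1 w) = (\<Sum>w\<in>C'. 2/3)" using prw by (intro sum.cong) auto
    also have "\<dots> = 2" using cC by simp
    finally have s: "(\<Sum>w\<in>C'. prw ord (Suc n) V E L v v1 w) = 2" .
    show ?thesis using j s prw[OF j] T1 by (simp add: fw_def)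
  qed
  have fwi: "fw ord (Suc n) V E L v v1 i = 0" using i1 by (simp add: fw_def)
  have ywi: "yw ord (Suc n) V E L v v1 v2 i = 0"
    using Pf_notin[of i "Lupd L [v1, v2] i 1" v2] i2 nb(2) by (simp add: yw_def Lupd_def)
  have d1: "deg E' v2 = 1" using nE'2 by (simp add: deg_def)
  have yw: "j \<in> C' \<Longrightarrow> yw ord (Suc n) V E L v v1 v2 j = 1/2" for j
  proof -
    assume j: "j \<in> C'"
    have Ljv2: "Lj j v2 = L v2" using nb(2) by (simp add: Lj_def Lupd_def)
    have Ljv1: "Lj j v1 = L v1 - {j}" by (simp add: Lj_def Lupd_def)
    have jL: "j \<in> Lj j v2" using Ljv2 T2 j by simp
    have c3: "card (Lj j v2) = 3" using Ljv2 T2 cC by simp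
    have ou: "ord V' E' (Lj j) v2 ! 0 = v1" using deg1_nbr[OF vo sg' d1, of "Lj j"] nE'2 by simp
    have te: "the_elem (colors - Lj j v2) = i" using Ljv2 T2 ic by (simp add: C'_def Diff_Diff_Int)
    note e2 = Pf_deg1_3[where L="Lj j" and v=v2 and i=j and E=E' and ord=ord and V=V' and n=n, OF jL d1 c3]
    have x0: "Pf ord n (delV V' v2) (delE E' v2) (Lj j) v1 j = 0" by (rule Pf_notin) (simp add: Ljv1)
    have y0: "Pf ord n (delV V' v2) (delE E' v2) (Lj j) v1 i = 0" by (rule Pf_notin) (simp add: Ljv1 i1)
    have "yw ord (Suc n) V E L v v1 v2 j = Pf ord (Suc n) V' E' (Lj j) v2 j"
      by (simp add: yw_def V'_def E'_def Lj_def)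
    also have "\<dots> = (1 - 0) / (2 + 0)" by (simp only: e2 ou te x0 y0)
    finally show ?thesis by simp
  qed
  have sum: "(\<Sum>j\<in>colors. (1 - fw ord (Suc n) V E L v v1 j) * (1 - yw ord (Suc n) V E L v v1 v2 j)) = 2"
  proof -
    have "(\<Sum>j\<in>colors. (1 - fw ord (Suc n) V E L v v1 j) * (1 - yw ord (Suc n) V E L v v1 v2 j)) =
        (1 - fw ord (Suc n) V E L v v1 i) * (1 - yw ord (Suc n) V E L v v1 v2 i) +
        (\<Sum>j\<in>C'. (1 - fw ord (Suc n) V E L v v1 j) * (1 - yw ord (Suc n) V E L v v1 v2 j))"
      using ic by (simp add: sum.remove C'_def)
    also have "(\<Sum>j\<in>C'. (1 - fw ord (Suc n) V E L v v1 j) * (1 - yw ord (Suc n) V E L v v1 v2 j)) = (\<Sum>j\<in>C'. 1/3)"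
    proof (rule sum.cong[OF refl])
      fix j assume j: "j \<in> C'"
      show "(1 - fw ord (Suc n) V E L v v1 j) * (1 - yw ord (Suc n) V E L v v1 v2 j) = 1/3"
        unfolding fw[OF j] yw[OF j] by simp
    qed
    also have "\<dots> = 1" using cC by simp
    finally show ?thesis using fwi ywi by simp
  qed
  show ?thesis unfolding F2_def Lc sum using fwi ywi by simp
qed



lemma fw_props_v:
  assumes vo: "valid_ord ord" and g: "good V E L" and v1: "v1 \<in> nbrs E v"
  shows "0 \<le> fw ord n V E L v v1 j" "fw ord n V E L v v1 j \<le> 1"
    "(\<Sum>j\<in>colors. fw ord n V E L v v1 j) = 1" "fw ord n V E L v v1 j \<le> 4/7"
    "deg E v1 \<le> 2 \<Longrightarrow> fw ord n V E L v v1 j \<le> 1/2"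
    "j \<in> L v1 \<Longrightarrow> 1/16 \<le> fw ord n V E L v v1 j"
    "j \<notin> L v1 \<Longrightarrow> fw ord n V E L v v1 j = 0"
proof -
  have IH: "\<And>V E L v i. reachable V E L v \<Longrightarrow> 0 \<le> Pf ord n V E L v i \<and> Pf ord n V E L v i \<le> 1/2"
    by (rule P01[OF vo])
  note F = fw_props[OF vo g v1 IH]
  show "0 \<le> fw ord n V E L v v1 j" by (rule F(1))
  show "fw ord n V E L v v1 j \<le> 1" by (rule F(2))
  show "(\<Sum>j\<in>colors. fw ord n V E L v v1 j) = 1" by (rule F(3))
  show "fw ord n V E L v v1 j \<le> 4/7" by (rule F(4))
  show "deg E v1 \<le> 2 \<Longrightarrow> fw ord n V E L v v1 j \<le> 1/2" by (rule F(5))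
  show "j \<in> L v1 \<Longrightarrow> 1/16 \<le> fw ord n V E L v v1 j" by (rule F(6))
  show "j \<notin> L v1 \<Longrightarrow> fw ord n V E L v v1 j = 0" by (rule F(7))
qed

lemma yw_bounds_v:
  assumes vo: "valid_ord ord" and g: "good V E L" and n: "nbrs E v = {v1, v2}" "v1 \<noteq> v2"
  shows "0 \<le> yw ord n V E L v v1 v2 j \<and> yw ord n V E L v v1 v2 j \<le> 1/2"
  unfolding yw_def by (rule P01[OF vo reach_y[OF g n]])

lemma alg_a2:
  fixes f y :: "nat \<Rightarrow> real"
  assumes C: "finite C" "card C = 4" "i \<in> C"
    and f: "\<And>j. j \<in> C \<Longrightarrow> 0 \<le> f j \<and> f j \<le> 1" and fs: "(\<Sum>j\<in>C. f j) = 1"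
    and y: "\<And>j. j \<in> C \<Longrightarrow> 0 \<le> y j \<and> y j \<le> 1/2"
    and alt: "f i \<ge> 1/16 \<or> y i \<ge> 1/14"
  shows "(1 - f i) * (1 - y i) / (\<Sum>j\<in>C. (1 - f j) * (1 - y j)) \<le> 13/27"
proof -
  define R where "R = (\<Sum>j\<in>C - {i}. (1 - f j) * (1 - y j))"
  have S: "(\<Sum>j\<in>C. (1 - f j) * (1 - y j)) = (1 - f i) * (1 - y i) + R"
    unfolding R_def using C by (simp add: sum.remove)
  have R2: "R \<ge> (2 + f i) / 2" unfolding R_def using core_inv(2)[OF C f fs y] .
  have fi: "0 \<le> f i" "f i \<le> 1" using f C by auto
  have yi0: "0 \<le> y i \<and> y i \<le> 1/2" using y C(3) by blast
  hence yi: "0 \<le> y i" "y i \<le> 1" by auto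
  show ?thesis unfolding S using alg_a[OF fi yi R2 alt] .
qed

lemma main2:
  assumes vo: "valid_ord ord" and R: "reachable V E L v" and d: "deg E v = 2" and ic: "i \<in> colors"
  defines "H \<equiv> \<exists>u1 u2. u1 \<noteq> u2 \<and> nbrs E v = {u1, u2} \<and> {u1, u2} \<in> E \<and> i \<notin> L u1 \<union> L u2"
  shows "H \<Longrightarrow> Pf ord (Suc (Suc n)) V E L v i = 1/2"
    and "\<not> H \<Longrightarrow> Pf ord (Suc (Suc n)) V E L v i \<le> 13/27"
proof -
  have Rg: "good V E L" "v \<in> V" "deg E v + 2 \<le> card (L v)" using R unfolding reach_good by auto
  have g: "good V E L" using Rg(1) .
  have sg: "simple_graph V E" using good_sg[OF g] .
  have LC: "L v \<subseteq> colors" using Rg(1,2) by (auto simp: good_def)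
  have Lc: "L v = colors" using Lv_colors[OF LC] Rg(3) d by simp
  have iL: "i \<in> L v" using Lc ic by simp
  obtain v1 v2 where o: "(v1 = ord V E L v ! 0 \<and> v2 = ord V E L v ! 1) \<or> (v1 = ord V E L v ! 1 \<and> v2 = ord V E L v ! 0)"
    and pe: "Pf ord (Suc (Suc n)) V E L v i = F2 ord (Suc n) V E L v v1 v2 i"
    using Pf_deg2[where L=L and v=v and i=i and E=E and ord=ord and V=V and n="Suc n", OF iL d] by blast
  have nb: "nbrs E v = {v1, v2}" "v1 \<noteq> v2" using deg2_nbrs[OF vo sg d o] by auto
  have v1n: "v1 \<in> nbrs E v" using nb by simp
  have HH: "H \<longleftrightarrow> ({v1, v2} \<in> E \<and> i \<notin> L v1 \<and> i \<notin> L v2)"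
  proof
    assume H
    then obtain u1 u2 where u: "u1 \<noteq> u2" "nbrs E v = {u1, u2}" "{u1, u2} \<in> E" "i \<notin> L u1 \<union> L u2"
      unfolding H_def by blast
    have "{u1, u2} = {v1, v2}" using u(2) nb(1) by simp
    hence "(u1 = v1 \<and> u2 = v2) \<or> (u1 = v2 \<and> u2 = v1)" by (auto simp: doubleton_eq_iff)
    thus "{v1, v2} \<in> E \<and> i \<notin> L v1 \<and> i \<notin> L v2" using u(3,4) by (auto simp: insert_commute)
  next
    assume "{v1, v2} \<in> E \<and> i \<notin> L v1 \<and> i \<notin> L v2"
    thus H unfolding H_def using nb by blast
  qed
  show "H \<Longrightarrow> Pf ord (Suc (Suc n)) V E L v i = 1/2"
  proof -
    assume H
    hence h: "{v1, v2} \<in> E" "i \<notin> L v1" "i \<notin> L v2" using HH by auto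
    show ?thesis unfolding pe using case_b[OF vo g Rg(2) nb h ic Lc] .
  qed
  show "\<not> H \<Longrightarrow> Pf ord (Suc (Suc n)) V E L v i \<le> 13/27"
  proof -
    assume nH: "\<not> H"
    have IH0: "\<And>V E L v i. reachable V E L v \<Longrightarrow> 0 \<le> Pf ord (Suc n) V E L v i \<and> Pf ord (Suc n) V E L v i \<le> 1/2"
      using P01[OF vo] by blast
    note FP = fw_props_v[where n="Suc n", OF vo g v1n]
    note YB = yw_bounds_v[where n="Suc n", OF vo g nb]
    have fC: "\<And>j. j \<in> colors \<Longrightarrow> 0 \<le> fw ord (Suc n) V E L v v1 j \<and> fw ord (Suc n) V E L v v1 j \<le> 1"
      using FP(1,2) by blast
    have F2e: "F2 ord (Suc n) V E L v v1 v2 i = (1 - fw ord (Suc n) V E L v v1 i) * (1 - yw ord (Suc n) V E L v v1 v2 i) /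
          (\<Sum>j\<in>colors. (1 - fw ord (Suc n) V E L v v1 j) * (1 - yw ord (Suc n) V E L v v1 v2 j))"
      by (simp add: F2_def Lc)
    show ?thesis
    proof (cases "i \<in> L v1 \<or> i \<in> L v2")
      case True
      have alt: "fw ord (Suc n) V E L v v1 i \<ge> 1/16 \<or> yw ord (Suc n) V E L v v1 v2 i \<ge> 1/14"
        using True
      proof
        assume "i \<in> L v1" thus ?thesis using FP(6) by blast
      next
        assume i2: "i \<in> L v2"
        have "Lupd L [v1, v2] i 1 v2 = L v2" using nb(2) by (simp add: Lupd_def)
        hence "i \<in> Lupd L [v1, v2] i 1 v2" using i2 by simp
        hence "1/14 \<le> yw ord (Suc n) V E L v v1 v2 i"
          unfolding yw_def using LB14[OF vo reach_y[OF g nb]] by blast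
        thus ?thesis by blast
      qed
      have fi: "0 \<le> fw ord (Suc n) V E L v v1 i" "fw ord (Suc n) V E L v v1 i \<le> 1" using fC ic by auto
      have "F2 ord (Suc n) V E L v v1 v2 i \<le> 13/27"
        unfolding F2e using alg_a2[where f="fw ord (Suc n) V E L v v1" and y="yw ord (Suc n) V E L v v1 v2", OF finite_atLeastAtMost _ ic fC FP(3) YB alt] by simp
      thus ?thesis unfolding pe .
    next
      case False
      hence i1: "i \<notin> L v1" and i2: "i \<notin> L v2" by auto
      have ne: "{v1, v2} \<notin> E" using nH HH i1 i2 by blast
      have v1V: "v1 \<in> V" using nbrs_in_V[OF sg v1n] by simp
      have gl: "L v1 \<subseteq> colors" "deg E v1 + 1 \<le> card (L v1)" using g v1V by (auto simp: good_def)
      have L1s: "L v1 \<subseteq> colors - {i}" using gl(1) i1 by auto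
      have "card (L v1) \<le> 3" using card_mono[OF _ L1s] colors_minus3[OF ic] by simp
      hence dv1: "deg E v1 \<le> 2" using gl(2) by linarith
      have fh: "\<And>j. j \<in> colors \<Longrightarrow> 0 \<le> fw ord (Suc n) V E L v v1 j \<and> fw ord (Suc n) V E L v v1 j \<le> 1/2"
        using FP(1) FP(5)[OF dv1] by blast
      have f0: "fw ord (Suc n) V E L v v1 i = 0" using FP(7)[OF i1] .
      have y0: "yw ord (Suc n) V E L v v1 v2 i = 0"
        unfolding yw_def by (rule Pf_notin) (use i2 nb(2) in \<open>simp add: Lupd_def\<close>)
      have yh: "\<And>j. j \<in> colors \<Longrightarrow> yw ord (Suc n) V E L v v1 v2 j \<le> 1/2" using YB by blast
      have cy: "(\<Sum>j\<in>colors - {i}. (1/2 - yw ord (Suc n) V E L v v1 v2 j)) \<ge> 2/13"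
        using case_c_y[OF vo g Rg(2) nb ne i1 i2 ic] .
      have "F2 ord (Suc n) V E L v v1 v2 i \<le> 13/27"
        unfolding F2e using alg_c[where f="fw ord (Suc n) V E L v v1" and y="yw ord (Suc n) V E L v v1 v2", OF finite_atLeastAtMost _ ic f0 y0 fh FP(3) yh cy] by simp
      thus ?thesis unfolding pe .
    qed
  qed
qed



lemma final_from:
  fixes F :: "nat \<Rightarrow> real"
  assumes h1: "Hd \<Longrightarrow> \<forall>m. F (Suc (Suc m)) = 1/2"
    and h2: "\<not> Hd \<Longrightarrow> \<forall>m. F (Suc (Suc m)) \<le> 13/27 \<and> (dl \<longrightarrow> F (Suc (Suc m)) \<le> 6/13)"
    and h3: "Hd \<Longrightarrow> Cs"
  shows "((\<forall>D::int. D \<ge> 2 \<longrightarrow> F (nat D) = 1/2) \<or>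
          ((\<forall>D::int. D \<ge> 2 \<longrightarrow> F (nat D) \<le> 13/27) \<and> (dl \<longrightarrow> (\<forall>D::int. D \<ge> 2 \<longrightarrow> F (nat D) \<le> 6/13)))) \<and>
         ((\<exists>D::int. D \<ge> 2 \<and> F (nat D) = 1/2) \<longrightarrow> Cs)"
proof -
  have nD: "\<And>D::int. D \<ge> 2 \<Longrightarrow> nat D = Suc (Suc (nat D - 2))" by simp
  show ?thesis
  proof (cases Hd)
    case True
    have "\<forall>D::int. D \<ge> 2 \<longrightarrow> F (nat D) = 1/2"
    proof (intro allI impI)
      fix D :: int assume "D \<ge> 2"
      thus "F (nat D) = 1/2" using h1[OF True] nD[of D] by metis
    qed
    thus ?thesis using h3[OF True] by blast
  next
    case False
    have a: "\<forall>D::int. D \<ge> 2 \<longrightarrow> F (nat D) \<le> 13/27 \<and> (dl \<longrightarrow> F (nat D) \<le> 6/13)"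
    proof (intro allI impI)
      fix D :: int assume "D \<ge> 2"
      thus "F (nat D) \<le> 13/27 \<and> (dl \<longrightarrow> F (nat D) \<le> 6/13)" using h2[OF False] nD[of D] by metis
    qed
    have b: "\<not> (\<exists>D::int. D \<ge> 2 \<and> F (nat D) = 1/2)" using a by force
    show ?thesis using a b by blast
  qed
qed

theorem theorem11:
  fixes ord :: "'a set \<Rightarrow> 'a set set \<Rightarrow> ('a \<Rightarrow> nat set) \<Rightarrow> 'a \<Rightarrow> 'a list"
    and V :: "'a set" and E :: "'a set set" and L :: "'a \<Rightarrow> nat set" and v :: 'a and i :: nat
  assumes "valid_ord ord"
    and "reachable V E L v"
    and "i \<in> colors"
  shows "((\<forall>D::int. D \<ge> 2 \<longrightarrow> P ord V E L v i D = 1/2) \<or>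
          ((\<forall>D::int. D \<ge> 2 \<longrightarrow> P ord V E L v i D \<le> 13/27) \<and>
           (deg E v \<le> 1 \<longrightarrow> (\<forall>D::int. D \<ge> 2 \<longrightarrow> P ord V E L v i D \<le> 6/13)))) \<and>
         ((\<exists>D::int. D \<ge> 2 \<and> P ord V E L v i D = 1/2) \<longrightarrow>
          (deg E v = 0 \<and> (\<exists>j w. j \<in> colors \<and> w \<in> colors \<and> j \<noteq> w \<and> j \<noteq> i \<and> w \<noteq> i \<and>
                              j \<notin> L v \<and> w \<notin> L v)) \<or>
          (deg E v = 1 \<and> (\<exists>u. nbrs E v = {u} \<and> i \<notin> L u \<and>
                              (\<exists>j\<in>colors. j \<noteq> i \<and> j \<notin> L u \<union> L v))) \<or>
          (deg E v = 2 \<and> (\<exists>u1 u2. u1 \<noteq> u2 \<and> nbrs E v = {u1, u2} \<and> {u1, u2} \<in> E \<and>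
                              i \<notin> L u1 \<union> L u2)))"
proof -
  note vo = assms(1) and R = assms(2) and ic = assms(3)
  have Rg: "good V E L" "v \<in> V" "deg E v \<le> 2" "deg E v + 2 \<le> card (L v)" using R unfolding reach_good by auto
  have sg: "simple_graph V E" using good_sg[OF Rg(1)] .
  have LC: "L v \<subseteq> colors" using Rg(1,2) by (auto simp: good_def)
  have c4: "card (L v) \<le> 4" using card_colors_le[OF LC] .
  have Pe: "\<And>D. P ord V E L v i D = (\<lambda>m. Pf ord m V E L v i) (nat D)" by (simp del: Pf.simps add: P_def)
  define Cs where "Cs \<equiv> (deg E v = 0 \<and> (\<exists>j w. j \<in> colors \<and> w \<in> colors \<and> j \<noteq> w \<and> j \<noteq> i \<and> w \<noteq> i \<and>
                              j \<notin> L v \<and> w \<notin> L v)) \<or>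
          (deg E v = 1 \<and> (\<exists>u. nbrs E v = {u} \<and> i \<notin> L u \<and>
                              (\<exists>j\<in>colors. j \<noteq> i \<and> j \<notin> L u \<union> L v))) \<or>
          (deg E v = 2 \<and> (\<exists>u1 u2. u1 \<noteq> u2 \<and> nbrs E v = {u1, u2} \<and> {u1, u2} \<in> E \<and>
                              i \<notin> L u1 \<union> L u2))"
  have main: "((\<forall>D::int. D \<ge> 2 \<longrightarrow> (\<lambda>m. Pf ord m V E L v i) (nat D) = 1/2) \<or>
          ((\<forall>D::int. D \<ge> 2 \<longrightarrow> (\<lambda>m. Pf ord m V E L v i) (nat D) \<le> 13/27) \<and>
           (deg E v \<le> 1 \<longrightarrow> (\<forall>D::int. D \<ge> 2 \<longrightarrow> (\<lambda>m. Pf ord m V E L v i) (nat D) \<le> 6/13)))) \<and>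
         ((\<exists>D::int. D \<ge> 2 \<and> (\<lambda>m. Pf ord m V E L v i) (nat D) = 1/2) \<longrightarrow> Cs)"
  proof -
    consider "deg E v = 0" | "deg E v = 1" | "deg E v = 2" using Rg(3) by linarith
    then show ?thesis
    proof cases
      case 1
      define Hd where "Hd = (i \<in> L v \<and> card (L v) = 2)"
      have pe: "\<And>m. Pf ord m V E L v i = (if i \<in> L v then 1 / real (card (L v)) else 0)"
        using Pf_deg0[OF 1] by (simp del: Pf.simps)
      show ?thesis
      proof (rule final_from[where Hd=Hd])
        assume Hd thus "\<forall>m. (\<lambda>m. Pf ord m V E L v i) (Suc (Suc m)) = 1/2" using pe by (simp del: Pf.simps add: Hd_def)
      next
        assume nH: "\<not> Hd"
        have "(if i \<in> L v then 1 / real (card (L v)) else 0) \<le> 1/3"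
        proof (cases "i \<in> L v")
          case True
          hence "card (L v) \<ge> 3" using nH Rg(4) 1 by (simp del: Pf.simps add: Hd_def)
          hence "real (card (L v)) \<ge> 3" by linarith
          thus ?thesis using True by (simp del: Pf.simps add: divide_simps)
        qed simp
        thus "\<forall>m. (\<lambda>m. Pf ord m V E L v i) (Suc (Suc m)) \<le> 13/27 \<and> (deg E v \<le> 1 \<longrightarrow> (\<lambda>m. Pf ord m V E L v i) (Suc (Suc m)) \<le> 6/13)"
          using pe by (simp del: Pf.simps)
      next
        assume H: Hd
        have "card (colors - L v) = 2" using H LC by (simp del: Pf.simps add: Hd_def card_Diff_subset finite_subset)
        then obtain j w where jw: "colors - L v = {j, w}" "j \<noteq> w" by (meson card_2_iff)
        have jm: "j \<in> colors - L v" "w \<in> colors - L v" unfolding jw(1) by simp_all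
        have iL: "i \<in> L v" using H by (simp only: Hd_def)
        have "j \<in> colors \<and> w \<in> colors \<and> j \<noteq> w \<and> j \<noteq> i \<and> w \<noteq> i \<and> j \<notin> L v \<and> w \<notin> L v"
          using jm jw(2) iL by blast
        thus Cs unfolding Cs_def using 1 by blast
      qed
    next
      case 2
      define v1 where "v1 = ord V E L v ! 0"
      define Hd where "Hd = (i \<in> L v \<and> card (L v) = 3 \<and> i \<notin> L v1 \<and> the_elem (colors - L v) \<notin> L v1)"
      note M = main1[OF vo R 2 ic, folded v1_def, folded Hd_def]
      show ?thesis
      proof (rule final_from[where Hd=Hd])
        assume Hd thus "\<forall>m. (\<lambda>m. Pf ord m V E L v i) (Suc (Suc m)) = 1/2" using M(1) by (simp del: Pf.simps)
      next
        assume nH: "\<not> Hd"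
        thus "\<forall>m. (\<lambda>m. Pf ord m V E L v i) (Suc (Suc m)) \<le> 13/27 \<and> (deg E v \<le> 1 \<longrightarrow> (\<lambda>m. Pf ord m V E L v i) (Suc (Suc m)) \<le> 6/13)"
        proof (intro allI conjI impI)
          fix m
          have h: "Pf ord (Suc (Suc m)) V E L v i \<le> 6/13" using M(2)[OF nH, of "Suc m"] .
          show "(\<lambda>m. Pf ord m V E L v i) (Suc (Suc m)) \<le> 13/27" using h by (simp del: Pf.simps)
          show "(\<lambda>m. Pf ord m V E L v i) (Suc (Suc m)) \<le> 6/13" using h by (simp del: Pf.simps)
        qed
      next
        assume H: Hd
        have j: "the_elem (colors - L v) \<in> colors \<and> the_elem (colors - L v) \<noteq> i \<and> the_elem (colors - L v) \<notin> L v"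
          using M(4)[OF H] .
        have "nbrs E v = {v1} \<and> i \<notin> L v1 \<and> (\<exists>j\<in>colors. j \<noteq> i \<and> j \<notin> L v1 \<union> L v)"
          using M(3) H j unfolding Hd_def by blast
        thus Cs unfolding Cs_def using 2 by blast
      qed
    next
      case 3
      define Hd where "Hd = (\<exists>u1 u2. u1 \<noteq> u2 \<and> nbrs E v = {u1, u2} \<and> {u1, u2} \<in> E \<and> i \<notin> L u1 \<union> L u2)"
      note M = main2[OF vo R 3 ic, folded Hd_def]
      show ?thesis
      proof (rule final_from[where Hd=Hd])
        assume Hd thus "\<forall>m. (\<lambda>m. Pf ord m V E L v i) (Suc (Suc m)) = 1/2" using M(1) by (simp del: Pf.simps)
      next
        assume nH: "\<not> Hd"
        thus "\<forall>m. (\<lambda>m. Pf ord m V E L v i) (Suc (Suc m)) \<le> 13/27 \<and> (deg E v \<le> 1 \<longrightarrow> (\<lambda>m. Pf ord m V E L v i) (Suc (Suc m)) \<le> 6/13)"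
          using M(2)[OF nH] 3 by (simp del: Pf.simps)
      next
        assume Hd thus Cs unfolding Cs_def Hd_def using 3 by blast
      qed
    qed
  qed
  show ?thesis using main unfolding Pe Cs_def by (simp del: Pf.simps)
qed


end
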